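(* Let $\mathcal K$ be a quantum channel on $n\times n$ matrices described by Kraus operators $K_1,\dots,K_d\in\mathbb C^{n\times n}$ (with $\mathcal K(\rho)=\sum_j K_j\rho K_j^\dagger$, $\sum_j K_j^\dagger K_j=I_n$) such that $K_1=\alpha I_n$ for some $\alpha\in\mathbb C$ and $\mathrm{Tr}(K_j)=0$ for $j=2,\dots,d$. Then $\lVert\mathcal K\rVert=\cos^{-1}\lvert\alpha\rvert$, with $\cos^{-1}$ taking values in $[0,\pi]$.
   Context: For a unitary matrix $U$ of size $r$ with eigenvalues $e^{i\theta_j}$, $\theta_j\in(-\pi,\pi]$, its time-energy cost is $\lVert U\rVert=\max_{1\le j\le r}|\theta_j|$. For a quantum channel $\mathcal K$ acting on an $n$-dimensional system $A$, its time-energy cost is $\lVert\mathcal K\rVert=\inf_U\lVert U\rVert$, where the infimum is over all finite-dimensional ancilla systems $B$ with a fixed standard state $|0\rangle_B$ and all unitaries $U_{BA}$ on $B\otimes A$ such that $\mathcal K(\rho)=\mathrm{Tr}_B[U_{BA}(|0\rangle_B\langle 0|\otimes\rho_A)U_{BA}^\dagger]$ for all density matrices $\rho$ on $A$. *)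

theory Defs
  imports "HOL-Analysis.Complex_Transcendental" "Jordan_Normal_Form.Schur_Decomposition"
begin

text \<open>An ancilla system B of dimension m and the system A of dimension n
  are combined into B \<otimes> A of dimension m*n, where the basis vector |b> \<otimes> |a>
  has index b*n + a. The standard ancilla state |0>_B is the first basis vector.\<close>

definition unitary_mat :: "nat \<Rightarrow> complex mat \<Rightarrow> bool" where
  "unitary_mat r U \<longleftrightarrow> U \<in> carrier_mat r r \<and> U * mat_adjoint U = 1\<^sub>m r \<and> mat_adjoint U * U = 1\<^sub>m r"

text \<open>Time-energy cost of a unitary: max |theta_j| over eigenvalues e^(i theta_j),
  theta_j in (-pi, pi] (this is exactly the range of Arg).\<close>
definition unitary_cost :: "complex mat \<Rightarrow> real" where
  "unitary_cost U = Max {\<bar>Arg z\<bar> | z. eigenvalue U z}"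

definition mat_trace :: "complex mat \<Rightarrow> complex" where
  "mat_trace A = (\<Sum>i<dim_row A. A $$ (i, i))"

definition density_mat :: "nat \<Rightarrow> complex mat \<Rightarrow> bool" where
  "density_mat n \<rho> \<longleftrightarrow> \<rho> \<in> carrier_mat n n \<and> mat_trace \<rho> = 1 \<and>
     (\<forall>v \<in> carrier_vec n. let z = conjugate v \<bullet> (\<rho> *\<^sub>v v) in Im z = 0 \<and> Re z \<ge> 0)"

text \<open>|0><0|_B \<otimes> \<rho>_A, with dim B = m.\<close>
definition anc_state :: "nat \<Rightarrow> nat \<Rightarrow> complex mat \<Rightarrow> complex mat" where
  "anc_state m n \<rho> = mat (m * n) (m * n)
     (\<lambda>(i, j). if i < n \<and> j < n then \<rho> $$ (i, j) else 0)"

definition ptrace_B :: "nat \<Rightarrow> nat \<Rightarrow> complex mat \<Rightarrow> complex mat" where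
  "ptrace_B m n X = mat n n (\<lambda>(a, a'). \<Sum>b<m. X $$ (b * n + a, b * n + a'))"

definition channel_cost :: "nat \<Rightarrow> (complex mat \<Rightarrow> complex mat) \<Rightarrow> real" where
  "channel_cost n \<Phi> = Inf {unitary_cost U | U m. m \<ge> 1 \<and> unitary_mat (m * n) U \<and>
     (\<forall>\<rho>. density_mat n \<rho> \<longrightarrow>
        \<Phi> \<rho> = ptrace_B m n (U * anc_state m n \<rho> * mat_adjoint U))}"

definition kraus_channel :: "nat \<Rightarrow> nat \<Rightarrow> (nat \<Rightarrow> complex mat) \<Rightarrow> complex mat \<Rightarrow> complex mat" where
  "kraus_channel n d K \<rho> = mat n n (\<lambda>(i, k). \<Sum>j<d. (K j * \<rho> * mat_adjoint (K j)) $$ (i, k))"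

end

theory Submission
  imports Defs "Jordan_Normal_Form.Spectral_Radius"
begin



lemma adj_dims[simp]: "dim_row (mat_adjoint A) = dim_col A" "dim_col (mat_adjoint A) = dim_row A"
  by (auto simp: mat_adjoint_def)

lemma adj_index[simp]: "i < dim_col A \<Longrightarrow> j < dim_row A \<Longrightarrow> mat_adjoint A $$ (i,j) = cnj (A $$ (j,i))"
  by (auto simp: mat_adjoint_def mat_of_rows_def)

lemma adj_carrier: "A \<in> carrier_mat r c \<Longrightarrow> mat_adjoint A \<in> carrier_mat c r"
  unfolding carrier_mat_def by (metis (mono_tags, lifting) adj_dims mem_Collect_eq)

lemma sum_blocks: "(\<Sum>i<m*n. g i) = (\<Sum>b<m. \<Sum>r<n. g (b*n + r :: nat))"
proof (induction m)
  case 0 then show ?case by simp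
next
  case (Suc m)
  have "{..<Suc m * n} = {..<m*n} \<union> {m*n..<m*n+n}" by auto
  then have "(\<Sum>i<Suc m*n. g i) = (\<Sum>i<m*n. g i) + (\<Sum>i\<in>{m*n..<m*n+n}. g i)"
    by (simp add: sum.union_disjoint ivl_disj_int_one(2) lessThan_atLeast0)
  also have "(\<Sum>i\<in>{m*n..<m*n+n}. g i) = (\<Sum>r<n. g (m*n+r))"
  proof -
    have "{m*n..<m*n+n} = (\<lambda>r. m*n+r) ` {..<n}"
      proof (auto simp: image_def)
      fix x assume "m*n \<le> x" "x < m*n+n"
      then show "\<exists>xa\<in>{..<n}. x = m * n + xa" by (intro bexI[of _ "x - m*n"]) auto
    qed
    then show ?thesis by (simp add: sum.reindex)
  qed
  finally show ?case using Suc by simp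
qed

lemma triple_entry:
  assumes "A \<in> carrier_mat r s" "B \<in> carrier_mat s t" "C \<in> carrier_mat t u" "i < r" "j < u"
  shows "(A * B * C) $$ (i,j) = (\<Sum>k<t. \<Sum>l<s. A $$ (i,l) * B $$ (l,k) * C $$ (k,j))"
proof -
  have AB: "A * B \<in> carrier_mat r t" using assms by auto
  have "(A * B * C) $$ (i,j) = (\<Sum>k<t. (A*B) $$ (i,k) * C $$ (k,j))"
    using assms AB by (simp add: scalar_prod_def atLeast0LessThan del: assoc_mult_mat)
  also have "\<dots> = (\<Sum>k<t. \<Sum>l<s. A $$ (i, l) * B $$ (l,k) * C $$ (k,j))"
    using assms by (auto simp: scalar_prod_def sum_distrib_right atLeast0LessThan intro!: sum.cong)
  finally show ?thesis .
qed

lemma sum_restrict: "(n::nat) \<le> N \<Longrightarrow> (\<And>k. n \<le> k \<Longrightarrow> k < N \<Longrightarrow> f k = 0) \<Longrightarrow> (\<Sum>k<N. f k) = (\<Sum>k<n. f k)"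
  by (rule sum.mono_neutral_right) auto

lemma anc_index: "l < m*n \<Longrightarrow> k < m*n \<Longrightarrow> anc_state m n \<rho> $$ (l,k) = (if l < n \<and> k < n then \<rho> $$ (l,k) else 0)"
  by (simp add: anc_state_def)

lemma ptrace_entry:
  assumes U: "U \<in> carrier_mat (m*n) (m*n)" and m: "m \<ge> 1" and a: "a < n" "a' < n"
  shows "ptrace_B m n (U * anc_state m n \<rho> * mat_adjoint U) $$ (a,a') =
    (\<Sum>b<m. \<Sum>p<n. \<Sum>q<n. U $$ (b*n+a,p) * \<rho> $$ (p,q) * cnj (U $$ (b*n+a',q)))"
proof -
  have nN: "n \<le> m*n" using m by simp
  have bi: "b*n + x < m*n" if "b < m" "x < n" for b x
  proof -
    have "b*n + x < b*n + n" using that by simp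
    also have "\<dots> = Suc b * n" by simp
    also have "\<dots> \<le> m*n" using that by (intro mult_le_mono1) simp
    finally show ?thesis .
  qed
  have anc: "anc_state m n \<rho> \<in> carrier_mat (m*n) (m*n)" by (simp add: anc_state_def)
  have "ptrace_B m n (U * anc_state m n \<rho> * mat_adjoint U) $$ (a,a') =
    (\<Sum>b<m. (U * anc_state m n \<rho> * mat_adjoint U) $$ (b*n+a, b*n+a'))"
    using a by (simp add: ptrace_B_def)
  also have "\<dots> = (\<Sum>b<m. \<Sum>q<m*n. \<Sum>p<m*n. U $$ (b*n+a,p) * anc_state m n \<rho> $$ (p,q) * mat_adjoint U $$ (q, b*n+a'))"
    by (intro sum.cong refl triple_entry[OF U anc adj_carrier[OF U]]) (use bi a in auto)
  also have "\<dots> = (\<Sum>b<m. \<Sum>q<n. \<Sum>p<n. U $$ (b*n+a,p) * \<rho> $$ (p,q) * cnj (U $$ (b*n+a',q)))"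
  proof (rule sum.cong[OF refl])
    fix b assume b: "b \<in> {..<m}"
    have "(\<Sum>q<m*n. \<Sum>p<m*n. U $$ (b*n+a,p) * anc_state m n \<rho> $$ (p,q) * mat_adjoint U $$ (q, b*n+a'))
       = (\<Sum>q<n. \<Sum>p<m*n. U $$ (b*n+a,p) * anc_state m n \<rho> $$ (p,q) * mat_adjoint U $$ (q, b*n+a'))"
      by (rule sum_restrict[OF nN]) (auto simp: anc_index intro!: sum.neutral)
    also have "\<dots> = (\<Sum>q<n. \<Sum>p<n. U $$ (b*n+a,p) * anc_state m n \<rho> $$ (p,q) * mat_adjoint U $$ (q, b*n+a'))"
      by (intro sum.cong refl sum_restrict[OF nN]) (auto simp: anc_index)
    also have "\<dots> = (\<Sum>q<n. \<Sum>p<n. U $$ (b*n+a,p) * \<rho> $$ (p,q) * cnj (U $$ (b*n+a',q)))"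
    proof (intro sum.cong refl)
      fix q p assume "q \<in> {..<n}" "p \<in> {..<n}"
      then have "q < m*n" "p < m*n" using less_le_trans[OF _ nN] by auto
      then show "U $$ (b*n+a,p) * anc_state m n \<rho> $$ (p,q) * mat_adjoint U $$ (q, b*n+a') =
          U $$ (b*n+a,p) * \<rho> $$ (p,q) * cnj (U $$ (b*n+a',q))"
        using U bi[of b a'] b a \<open>q \<in> _\<close> \<open>p \<in> _\<close> by (auto simp: anc_index)
    qed
    finally show "(\<Sum>q<m*n. \<Sum>p<m*n. U $$ (b*n+a,p) * anc_state m n \<rho> $$ (p,q) * mat_adjoint U $$ (q, b*n+a'))
       = (\<Sum>q<n. \<Sum>p<n. U $$ (b*n+a,p) * \<rho> $$ (p,q) * cnj (U $$ (b*n+a',q)))" .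
  qed
  also have "\<dots> = (\<Sum>b<m. \<Sum>p<n. \<Sum>q<n. U $$ (b*n+a,p) * \<rho> $$ (p,q) * cnj (U $$ (b*n+a',q)))"
    by (rule sum.cong[OF refl], rule sum.swap)
  finally show ?thesis .
qed

lemma kraus_entry:
  assumes K: "\<forall>j<d. K j \<in> carrier_mat n n" and r: "\<rho> \<in> carrier_mat n n" and a: "a < n" "a' < n"
  shows "kraus_channel n d K \<rho> $$ (a,a') =
    (\<Sum>j<d. \<Sum>p<n. \<Sum>q<n. K j $$ (a,p) * \<rho> $$ (p,q) * cnj (K j $$ (a',q)))"
proof -
  have "kraus_channel n d K \<rho> $$ (a,a') = (\<Sum>j<d. (K j * \<rho> * mat_adjoint (K j)) $$ (a,a'))"
    using a by (simp add: kraus_channel_def)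
  also have "\<dots> = (\<Sum>j<d. \<Sum>q<n. \<Sum>p<n. K j $$ (a,p) * \<rho> $$ (p,q) * mat_adjoint (K j) $$ (q,a'))"
    using K r a by (intro sum.cong refl triple_entry[of _ n n]) (auto intro: adj_carrier)
  also have "\<dots> = (\<Sum>j<d. \<Sum>p<n. \<Sum>q<n. K j $$ (a,p) * \<rho> $$ (p,q) * cnj (K j $$ (a',q)))"
    using K a by (subst sum.swap) (auto intro!: sum.cong)
  finally show ?thesis .
qed




definition pure :: "nat \<Rightarrow> (nat \<Rightarrow> complex) \<Rightarrow> complex mat" where
  "pure n v = mat n n (\<lambda>(p,q). v p * cnj (v q))"

lemma pure_density:
  assumes "(\<Sum>i<n. (cmod (v i))^2) = 1"
  shows "density_mat n (pure n v)"
proof -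
  have tr: "mat_trace (pure n v) = 1"
  proof -
    have "mat_trace (pure n v) = (\<Sum>i<n. v i * cnj (v i))" by (simp add: mat_trace_def pure_def)
    also have "\<dots> = (\<Sum>i<n. complex_of_real ((cmod (v i))^2))" by (intro sum.cong refl) (metis complex_norm_square norm_complex_def)
    also have "\<dots> = complex_of_real (\<Sum>i<n. (cmod (v i))^2)" by (rule of_real_sum[symmetric])
    finally show ?thesis using assms by simp
  qed
  have pos: "Im (conjugate w \<bullet> (pure n v *\<^sub>v w)) = 0 \<and> Re (conjugate w \<bullet> (pure n v *\<^sub>v w)) \<ge> 0"
    if w: "w \<in> carrier_vec n" for w
  proof -
    define z where "z = (\<Sum>j<n. cnj (v j) * w $ j)"
    have "conjugate w \<bullet> (pure n v *\<^sub>v w) = (\<Sum>i<n. cnj (w $ i) * (\<Sum>j<n. v i * cnj (v j) * w $ j))"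
      using w by (simp add: scalar_prod_def pure_def atLeast0LessThan)
    also have "\<dots> = (\<Sum>i<n. cnj (w $ i) * v i) * z"
      by (simp add: z_def sum_distrib_left sum_distrib_right mult.assoc mult.left_commute) (rule sum.swap)
    also have "(\<Sum>i<n. cnj (w $ i) * v i) = cnj z" by (simp add: z_def mult.commute)
    finally have "conjugate w \<bullet> (pure n v *\<^sub>v w) = cnj z * z" .
    then show ?thesis by (simp add: mult.commute[of "cnj z"] complex_norm_square[symmetric])
  qed
  show ?thesis unfolding density_mat_def using tr pos by (auto simp: pure_def Let_def)
qed




definition qform :: "nat \<Rightarrow> (nat \<Rightarrow> nat \<Rightarrow> complex) \<Rightarrow> (nat \<Rightarrow> complex) \<Rightarrow> complex" where
  "qform n C v = (\<Sum>p<n. \<Sum>q<n. C p q * v p * cnj (v q))"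

lemma sum_support2:
  assumes "p < (n::nat)" "q < n" "\<And>k. k \<noteq> p \<Longrightarrow> k \<noteq> q \<Longrightarrow> g k = 0"
  shows "(\<Sum>k<n. g k) = (\<Sum>k\<in>{p,q}. g k)"
  by (rule sum.mono_neutral_right) (use assms in auto)

lemma qform_two:
  assumes "p < n" "q < n" "p \<noteq> q"
  shows "qform n C (\<lambda>k. if k = p then x else if k = q then y else 0) =
     C p p * x * cnj x + C p q * x * cnj y + C q p * y * cnj x + C q q * y * cnj y"
proof -
  let ?v = "\<lambda>k. if k = p then x else if k = q then y else 0"
  have "qform n C ?v = (\<Sum>a\<in>{p,q}. \<Sum>b<n. C a b * ?v a * cnj (?v b))"
    unfolding qform_def by (rule sum_support2) (use assms in auto)
  also have "\<dots> = (\<Sum>a\<in>{p,q}. \<Sum>b\<in>{p,q}. C a b * ?v a * cnj (?v b))"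
    by (intro sum.cong refl sum_support2) (use assms in auto)
  finally show ?thesis using assms by (simp add: algebra_simps)
qed

lemma qform_one:
  assumes "p < n"
  shows "qform n C (\<lambda>k. if k = p then x else 0) = C p p * x * cnj x"
proof -
  let ?v = "\<lambda>k. if k = p then x else 0"
  have "qform n C ?v = (\<Sum>a\<in>{p,p}. \<Sum>b<n. C a b * ?v a * cnj (?v b))"
    unfolding qform_def by (rule sum_support2) (use assms in auto)
  also have "\<dots> = (\<Sum>a\<in>{p,p}. \<Sum>b\<in>{p,p}. C a b * ?v a * cnj (?v b))"
    by (intro sum.cong refl sum_support2) (use assms in auto)
  finally show ?thesis using assms by simp
qed

lemma qform_scale: "qform n C (\<lambda>k. of_real r * v k) = of_real (r^2) * qform n C v"
  by (simp add: qform_def sum_distrib_left power2_eq_square algebra_simps)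

lemma qform_zero_all:
  assumes "\<forall>v. (\<Sum>p<n. (cmod (v p))^2) = 1 \<longrightarrow> qform n C v = 0"
  shows "qform n C v = 0"
proof (cases "(\<Sum>p<n. (cmod (v p))^2) = 0")
  case True
  then have "\<forall>p<n. v p = 0" by (simp add: sum_nonneg_eq_0_iff)
  then show ?thesis by (simp add: qform_def)
next
  case False
  define N where "N = (\<Sum>p<n. (cmod (v p))^2)"
  have Npos: "N > 0" using False by (simp add: N_def sum_nonneg order_le_neq_trans)
  define r where "r = 1 / sqrt N"
  have r2: "r^2 * N = 1" using Npos by (simp add: r_def power_divide)
  have "(\<Sum>p<n. (cmod (of_real r * v p))^2) = r^2 * N"
    by (simp add: N_def norm_mult power_mult_distrib sum_distrib_left)
  then have "qform n C (\<lambda>k. of_real r * v k) = 0" using assms r2 by simp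
  then have "of_real (r^2) * qform n C v = 0" by (simp add: qform_scale)
  moreover have "r \<noteq> 0" using r2 by auto
  ultimately show ?thesis by simp
qed

lemma polarization:
  assumes "\<forall>v. qform n C v = 0" "p < n" "q < n"
  shows "C p q = 0"
proof (cases "p = q")
  case True
  then show ?thesis using assms(1)[rule_format, of "\<lambda>k. if k = p then 1 else 0"] qform_one[OF assms(2), of C 1] by simp
next
  case False
  have pp: "C p p = 0" using assms(1)[rule_format, of "\<lambda>k. if k = p then 1 else 0"] qform_one[OF assms(2), of C 1] by simp
  have qq: "C q q = 0" using assms(1)[rule_format, of "\<lambda>k. if k = q then 1 else 0"] qform_one[OF assms(3), of C 1] by simp
  have 1: "C p q + C q p = 0"
    using assms(1)[rule_format, of "\<lambda>k. if k = p then 1 else if k = q then 1 else 0"]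
      qform_two[OF assms(2,3) False, of C 1 1] pp qq by simp
  have 2: "- \<i> * C p q + \<i> * C q p = 0"
    using assms(1)[rule_format, of "\<lambda>k. if k = p then 1 else if k = q then \<i> else 0"]
      qform_two[OF assms(2,3) False, of C 1 \<i>] pp qq by (simp add: algebra_simps)
  from 1 have "C q p = - C p q" by (simp add: eq_neg_iff_add_eq_0 add.commute)
  with 2 have "(-2 * \<i>) * C p q = 0" by (simp add: algebra_simps)
  then show ?thesis by simp
qed




lemma dilation_coeff:
  assumes K: "\<forall>j<d. K j \<in> carrier_mat n n"
    and U: "U \<in> carrier_mat (m*n) (m*n)" and m: "m \<ge> 1"
    and dil: "\<forall>\<rho>. density_mat n \<rho> \<longrightarrow> kraus_channel n d K \<rho> = ptrace_B m n (U * anc_state m n \<rho> * mat_adjoint U)"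
    and a: "a < n" "a' < n" and pq: "p < n" "q < n"
  shows "(\<Sum>j<d. K j $$ (a,p) * cnj (K j $$ (a',q))) = (\<Sum>b<m. U $$ (b*n+a,p) * cnj (U $$ (b*n+a',q)))"
proof -
  define C where "C p q = (\<Sum>j<d. K j $$ (a,p) * cnj (K j $$ (a',q))) - (\<Sum>b<m. U $$ (b*n+a,p) * cnj (U $$ (b*n+a',q)))" for p q
  have "qform n C v = 0" if v: "(\<Sum>p<n. (cmod (v p))^2) = 1" for v
  proof -
    have den: "density_mat n (pure n v)" by (rule pure_density[OF v])
    have car: "pure n v \<in> carrier_mat n n" by (simp add: pure_def)
    have "kraus_channel n d K (pure n v) $$ (a,a') = ptrace_B m n (U * anc_state m n (pure n v) * mat_adjoint U) $$ (a,a')"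
      using dil den by simp
    then have eq: "(\<Sum>j<d. \<Sum>p<n. \<Sum>q<n. K j $$ (a,p) * pure n v $$ (p,q) * cnj (K j $$ (a',q))) =
      (\<Sum>b<m. \<Sum>p<n. \<Sum>q<n. U $$ (b*n+a,p) * pure n v $$ (p,q) * cnj (U $$ (b*n+a',q)))"
      by (simp only: kraus_entry[OF K car a] ptrace_entry[OF U m a])
    have L: "(\<Sum>j<d. \<Sum>p<n. \<Sum>q<n. K j $$ (a,p) * pure n v $$ (p,q) * cnj (K j $$ (a',q))) =
        (\<Sum>p<n. \<Sum>q<n. (\<Sum>j<d. K j $$ (a,p) * cnj (K j $$ (a',q))) * v p * cnj (v q))"
    proof -
      have "(\<Sum>j<d. \<Sum>p<n. \<Sum>q<n. K j $$ (a,p) * pure n v $$ (p,q) * cnj (K j $$ (a',q))) =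
         (\<Sum>j<d. \<Sum>p<n. \<Sum>q<n. K j $$ (a,p) * cnj (K j $$ (a',q)) * v p * cnj (v q))"
        by (intro sum.cong refl) (simp add: pure_def algebra_simps)
      also have "\<dots> = (\<Sum>p<n. \<Sum>j<d. \<Sum>q<n. K j $$ (a,p) * cnj (K j $$ (a',q)) * v p * cnj (v q))"
        by (rule sum.swap)
      also have "\<dots> = (\<Sum>p<n. \<Sum>q<n. \<Sum>j<d. K j $$ (a,p) * cnj (K j $$ (a',q)) * v p * cnj (v q))"
        by (rule sum.cong[OF refl], rule sum.swap)
      also have "\<dots> = (\<Sum>p<n. \<Sum>q<n. (\<Sum>j<d. K j $$ (a,p) * cnj (K j $$ (a',q))) * v p * cnj (v q))"
        by (simp add: sum_distrib_right)
      finally show ?thesis .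
    qed
    have R: "(\<Sum>b<m. \<Sum>p<n. \<Sum>q<n. U $$ (b*n+a,p) * pure n v $$ (p,q) * cnj (U $$ (b*n+a',q))) =
        (\<Sum>p<n. \<Sum>q<n. (\<Sum>b<m. U $$ (b*n+a,p) * cnj (U $$ (b*n+a',q))) * v p * cnj (v q))"
    proof -
      have "(\<Sum>b<m. \<Sum>p<n. \<Sum>q<n. U $$ (b*n+a,p) * pure n v $$ (p,q) * cnj (U $$ (b*n+a',q))) =
         (\<Sum>b<m. \<Sum>p<n. \<Sum>q<n. U $$ (b*n+a,p) * cnj (U $$ (b*n+a',q)) * v p * cnj (v q))"
        by (intro sum.cong refl) (simp add: pure_def algebra_simps)
      also have "\<dots> = (\<Sum>p<n. \<Sum>b<m. \<Sum>q<n. U $$ (b*n+a,p) * cnj (U $$ (b*n+a',q)) * v p * cnj (v q))"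
        by (rule sum.swap)
      also have "\<dots> = (\<Sum>p<n. \<Sum>q<n. \<Sum>b<m. U $$ (b*n+a,p) * cnj (U $$ (b*n+a',q)) * v p * cnj (v q))"
        by (rule sum.cong[OF refl], rule sum.swap)
      also have "\<dots> = (\<Sum>p<n. \<Sum>q<n. (\<Sum>b<m. U $$ (b*n+a,p) * cnj (U $$ (b*n+a',q))) * v p * cnj (v q))"
        by (simp add: sum_distrib_right)
      finally show ?thesis .
    qed
    show ?thesis using eq L R unfolding qform_def C_def
      by (simp add: left_diff_distrib sum_subtractf)
  qed
  then have "\<forall>v. qform n C v = 0" using qform_zero_all by blast
  then have "C p q = 0" using polarization pq by blast
  then show ?thesis by (simp add: C_def)
qed




lemma trace_bound:
  assumes K: "\<forall>j<d. K j \<in> carrier_mat n n" and d: "d \<ge> 1"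
    and K0: "K 0 = \<alpha> \<cdot>\<^sub>m 1\<^sub>m n"
    and tr: "\<forall>j. 1 \<le> j \<and> j < d \<longrightarrow> mat_trace (K j) = 0"
    and U: "U \<in> carrier_mat (m*n) (m*n)" and m: "m \<ge> 1"
    and dil: "\<forall>\<rho>. density_mat n \<rho> \<longrightarrow> kraus_channel n d K \<rho> = ptrace_B m n (U * anc_state m n \<rho> * mat_adjoint U)"
  shows "cmod (\<Sum>p<n. U $$ (p,p)) \<le> real n * cmod \<alpha>"
proof -
  define t where "t b = (\<Sum>p<n. U $$ (b*n+p,p))" for b
  define T where "T j = (\<Sum>p<n. K j $$ (p,p))" for j
  have co: "(\<Sum>j<d. K j $$ (p,p) * cnj (K j $$ (q,q))) = (\<Sum>b<m. U $$ (b*n+p,p) * cnj (U $$ (b*n+q,q)))"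
    if "p < n" "q < n" for p q using dilation_coeff[OF K U m dil that that] .
  have "(\<Sum>p<n. \<Sum>q<n. \<Sum>j<d. K j $$ (p,p) * cnj (K j $$ (q,q))) = (\<Sum>p<n. \<Sum>q<n. \<Sum>b<m. U $$ (b*n+p,p) * cnj (U $$ (b*n+q,q)))"
    using co by simp
  also have "\<dots> = (\<Sum>b<m. t b * cnj (t b))"
    by (simp add: t_def sum_distrib_left sum_distrib_right sum.swap[of _ "{..<m}"] mult.commute) (rule sum.cong[OF refl], rule sum.swap)
  finally have eq1: "(\<Sum>p<n. \<Sum>q<n. \<Sum>j<d. K j $$ (p,p) * cnj (K j $$ (q,q))) = (\<Sum>b<m. t b * cnj (t b))" .
  have "(\<Sum>p<n. \<Sum>q<n. \<Sum>j<d. K j $$ (p,p) * cnj (K j $$ (q,q))) = (\<Sum>j<d. T j * cnj (T j))"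
    by (simp add: T_def sum_distrib_left sum_distrib_right sum.swap[of _ "{..<d}"] mult.commute) (rule sum.cong[OF refl], rule sum.swap)
  also have "\<dots> = T 0 * cnj (T 0)"
  proof -
    have "(\<Sum>j<d. T j * cnj (T j)) = (\<Sum>j\<in>{0}. T j * cnj (T j))"
    proof (rule sum.mono_neutral_right)
      show "\<forall>i\<in>{..<d} - {0}. T i * cnj (T i) = 0"
      proof
        fix j assume j: "j \<in> {..<d} - {0}"
        then have "mat_trace (K j) = 0" using tr by auto
        moreover have "mat_trace (K j) = T j" using K j by (auto simp: mat_trace_def T_def)
        ultimately show "T j * cnj (T j) = 0" by simp
      qed
    qed (use d in auto)
    then show ?thesis by simp
  qed
  also have "T 0 = of_nat n * \<alpha>" by (simp add: T_def K0)
  finally have eq2: "(\<Sum>b<m. t b * cnj (t b)) = (of_nat n * \<alpha>) * cnj (of_nat n * \<alpha>)" using eq1 by simp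
  have Rc: "Re (z * cnj z) = (cmod z)^2" for z :: complex by (simp add: complex_mult_cnj cmod_power2)
  have "(cmod (t 0))^2 \<le> (\<Sum>b<m. (cmod (t b))^2)"
    using m by (intro member_le_sum) auto
  also have "(\<Sum>b<m. (cmod (t b))^2) = Re (\<Sum>b<m. t b * cnj (t b))"
    by (simp only: Re_sum Rc)
  also have "\<dots> = (cmod (of_nat n * \<alpha>))^2"
    unfolding eq2 by (rule Rc)
  finally have "(cmod (t 0))^2 \<le> (real n * cmod \<alpha>)^2" by (simp add: norm_mult)
  then have "cmod (t 0) \<le> real n * cmod \<alpha>" by (rule power2_le_imp_le) simp
  then show ?thesis by (simp add: t_def)
qed




definition mvec :: "nat \<Rightarrow> (nat \<Rightarrow> nat \<Rightarrow> complex) \<Rightarrow> (nat \<Rightarrow> complex) \<Rightarrow> nat \<Rightarrow> complex" where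
  "mvec N A v = (\<lambda>i. \<Sum>j<N. A i j * v j)"
definition ipr :: "nat \<Rightarrow> (nat \<Rightarrow> complex) \<Rightarrow> (nat \<Rightarrow> complex) \<Rightarrow> complex" where
  "ipr N v w = (\<Sum>i<N. cnj (v i) * w i)"
definition mmul :: "nat \<Rightarrow> (nat \<Rightarrow> nat \<Rightarrow> complex) \<Rightarrow> (nat \<Rightarrow> nat \<Rightarrow> complex) \<Rightarrow> nat \<Rightarrow> nat \<Rightarrow> complex" where
  "mmul N A B = (\<lambda>i j. \<Sum>k<N. A i k * B k j)"
definition iso :: "nat \<Rightarrow> (nat \<Rightarrow> nat \<Rightarrow> complex) \<Rightarrow> bool" where
  "iso N A \<longleftrightarrow> (\<forall>v w. ipr N (mvec N A v) (mvec N A w) = ipr N v w)"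
definition eig :: "nat \<Rightarrow> (nat \<Rightarrow> nat \<Rightarrow> complex) \<Rightarrow> complex \<Rightarrow> bool" where
  "eig N A l \<longleftrightarrow> (\<exists>v. (\<exists>i<N. v i \<noteq> 0) \<and> (\<forall>i<N. mvec N A v i = l * v i))"

lemma mvec_mmul: "mvec N (mmul N A B) v = mvec N A (mvec N B v)"
proof (rule ext)
  fix i
  have "mvec N (mmul N A B) v i = (\<Sum>j<N. \<Sum>k<N. A i k * (B k j * v j))"
    unfolding mvec_def mmul_def by (simp add: sum_distrib_right mult.assoc)
  also have "\<dots> = (\<Sum>k<N. \<Sum>j<N. A i k * (B k j * v j))" by (rule sum.swap)
  also have "\<dots> = mvec N A (mvec N B v) i"
    unfolding mvec_def by (simp add: sum_distrib_left)
  finally show "mvec N (mmul N A B) v i = mvec N A (mvec N B v) i" .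
qed

lemma mvec_cong: "(\<And>i. i < N \<Longrightarrow> v i = w i) \<Longrightarrow> mvec N A v = mvec N A w"
  unfolding mvec_def by (intro ext sum.cong) auto

lemma ipr_cong: "(\<And>i. i < N \<Longrightarrow> v i = v' i) \<Longrightarrow> (\<And>i. i < N \<Longrightarrow> w i = w' i) \<Longrightarrow> ipr N v w = ipr N v' w'"
  unfolding ipr_def by (intro sum.cong) auto

lemma ipr_norm: "ipr N v v = of_real (\<Sum>i<N. (cmod (v i))^2)"
  unfolding ipr_def of_real_sum by (intro sum.cong refl) (metis complex_norm_square mult.commute norm_complex_def)

lemma ipr_cnj: "cnj (ipr N v w) = ipr N w v"
  unfolding ipr_def by (simp add: mult.commute)

lemma ipr_lin: "ipr N v (\<lambda>i. w i - k * z i) = ipr N v w - k * ipr N v z"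
  unfolding ipr_def by (simp add: algebra_simps sum_subtractf sum_distrib_left)

lemma ipr_scal: "ipr N v (\<lambda>i. k * z i) = k * ipr N v z"
  unfolding ipr_def by (simp add: algebra_simps sum_distrib_left)

lemma ipr_lin1: "ipr N (\<lambda>i. w i - k * z i) v = ipr N w v - cnj k * ipr N z v"
  unfolding ipr_def by (simp add: algebra_simps sum_subtractf sum_distrib_left)

lemma ipr_real: "cnj (ipr N u u) = ipr N u u"
  by (simp add: ipr_cnj)

definition hh :: "nat \<Rightarrow> (nat \<Rightarrow> complex) \<Rightarrow> (nat \<Rightarrow> complex) \<Rightarrow> nat \<Rightarrow> complex" where
  "hh N u v = (\<lambda>i. v i - (2 / ipr N u u) * u i * ipr N u v)"
definition hm :: "nat \<Rightarrow> (nat \<Rightarrow> complex) \<Rightarrow> nat \<Rightarrow> nat \<Rightarrow> complex" where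
  "hm N u = (\<lambda>i j. (if i = j then 1 else 0) - (2 / ipr N u u) * u i * cnj (u j))"

lemma sum_delta_lt: "i < (N::nat) \<Longrightarrow> (\<Sum>j<N. (if i = j then 1 else 0) * (v j :: complex)) = v i"
proof -
  assume i: "i < N"
  have "(\<Sum>j<N. (if i = j then 1 else 0) * (v j :: complex)) = (\<Sum>j<N. if i = j then v j else 0)"
    by (intro sum.cong) auto
  also have "\<dots> = v i" using i by (subst sum.delta') auto
  finally show ?thesis .
qed

lemma mvec_hm: "i < N \<Longrightarrow> mvec N (hm N u) v i = hh N u v i"
  unfolding mvec_def hm_def hh_def ipr_def
  by (simp add: left_diff_distrib sum_subtractf sum_delta_lt sum_distrib_left mult.assoc)

lemma hh_cong: "(\<And>i. i < N \<Longrightarrow> v i = w i) \<Longrightarrow> i < N \<Longrightarrow> hh N u v i = hh N u w i"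
  unfolding hh_def using ipr_cong[of N u u v w] by simp

lemma hh_alt: "hh N u v = (\<lambda>i. v i - ((2 / ipr N u u) * ipr N u v) * u i)"
  unfolding hh_def by (simp add: algebra_simps)

lemma hh_invol: "hh N u (hh N u v) i = v i"
proof -
  define q where "q = ipr N u u"
  define c where "c = 2 / q"
  define a where "a = ipr N u v"
  have e: "ipr N u (hh N u v) = a - (c * a) * q"
    unfolding hh_alt ipr_lin a_def c_def q_def ..
  show ?thesis
  proof (cases "q = 0")
    case True
    then show ?thesis by (simp add: hh_def q_def)
  next
    case False
    then have "c * q = 2" by (simp add: c_def)
    then have "ipr N u (hh N u v) = - a" unfolding e by (simp add: algebra_simps)
    then show ?thesis unfolding hh_def[of N u "hh N u v"]
      by (simp add: hh_def a_def[symmetric] q_def[symmetric] c_def[symmetric] algebra_simps)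
  qed
qed

lemma hh_adj: "ipr N (hh N u v) w = ipr N v (hh N u w)"
proof -
  let ?q = "ipr N u u"
  have c: "cnj (2 / ?q) = 2 / ?q" by (simp add: ipr_real)
  have "ipr N (hh N u v) w = ipr N v w - cnj ((2 / ?q) * ipr N u v) * ipr N u w"
    unfolding hh_def using ipr_lin1[of N v "(2 / ?q) * ipr N u v" u w] by (simp add: algebra_simps)
  also have "\<dots> = ipr N v w - (2 / ?q) * ipr N v u * ipr N u w"
    by (simp only: complex_cnj_mult c ipr_cnj mult.assoc)
  also have "\<dots> = ipr N v (hh N u w)"
    unfolding hh_def using ipr_lin[of N v w "(2 / ?q) * ipr N u w" u] by (simp add: algebra_simps)
  finally show ?thesis .
qed

lemma hh_iso: "ipr N (hh N u v) (hh N u w) = ipr N v w"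
  using hh_adj[of N u v "hh N u w"] ipr_cong[of N v v "hh N u (hh N u w)" w] hh_invol[of N u w] by simp

lemma hh_scal: "hh N u (\<lambda>i. l * v i) i = l * hh N u v i"
  unfolding hh_def by (simp add: ipr_scal algebra_simps)




lemma eig_jnf: 
  assumes "U \<in> carrier_mat N N"
  shows "eigenvalue U l \<longleftrightarrow> eig N (\<lambda>i j. U $$ (i,j)) l"
proof
  assume "eigenvalue U l"
  then obtain w where "eigenvector U w l" by (auto simp: eigenvalue_def)
  then have wc: "w \<in> carrier_vec N" "w \<noteq> 0\<^sub>v N" "U *\<^sub>v w = l \<cdot>\<^sub>v w" using assms by (auto simp: eigenvector_def)
  have "\<exists>i<N. w $ i \<noteq> 0"
  proof (rule ccontr)
    assume "\<not> ?thesis"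
    then have "w = 0\<^sub>v N" using wc(1) by (intro eq_vecI) auto
    with wc(2) show False by simp
  qed
  moreover have "mvec N (\<lambda>i j. U $$ (i,j)) (\<lambda>i. w $ i) i = l * w $ i" if i: "i < N" for i
  proof -
    have "(U *\<^sub>v w) $ i = l * w $ i" using wc i by simp
    moreover have "(U *\<^sub>v w) $ i = (\<Sum>j<N. U $$ (i,j) * w $ j)"
      using assms wc(1) i by (auto simp: scalar_prod_def atLeast0LessThan)
    ultimately show ?thesis by (simp add: mvec_def)
  qed
  ultimately show "eig N (\<lambda>i j. U $$ (i,j)) l" unfolding eig_def by blast
next
  assume "eig N (\<lambda>i j. U $$ (i,j)) l"
  then obtain v where v: "\<exists>i<N. v i \<noteq> 0" "\<forall>i<N. mvec N (\<lambda>i j. U $$ (i,j)) v i = l * v i"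
    unfolding eig_def by blast
  define w where "w = vec N v"
  have "w \<in> carrier_vec N" by (simp add: w_def)
  moreover have "w \<noteq> 0\<^sub>v N"
  proof
    assume "w = 0\<^sub>v N"
    then have "\<forall>i<N. v i = 0" unfolding w_def by (metis index_vec index_zero_vec(1))
    with v(1) show False by blast
  qed
  moreover have "U *\<^sub>v w = l \<cdot>\<^sub>v w"
  proof (rule eq_vecI)
    fix i assume "i < dim_vec (l \<cdot>\<^sub>v w)"
    then have i: "i < N" by (simp add: w_def)
    have "(U *\<^sub>v w) $ i = (\<Sum>j<N. U $$ (i,j) * v j)"
      using assms i by (auto simp: scalar_prod_def atLeast0LessThan w_def)
    also have "\<dots> = l * v i" using v(2) i by (simp add: mvec_def)
    finally show "(U *\<^sub>v w) $ i = (l \<cdot>\<^sub>v w) $ i" using i by (simp add: w_def)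
  qed (use assms in \<open>simp add: w_def\<close>)
  ultimately have "eigenvector U w l" using assms by (auto simp: eigenvector_def)
  then show "eigenvalue U l" by (auto simp: eigenvalue_def)
qed

lemma eig_exists: "N > 0 \<Longrightarrow> \<exists>l. eig N A l"
proof -
  assume N: "N > 0"
  let ?M = "mat N N (\<lambda>(i,j). A i j)"
  have M: "?M \<in> carrier_mat N N" by simp
  from spectrum_non_empty[OF M N] obtain l where "eigenvalue ?M l" by (auto simp: spectrum_def)
  then have "eig N (\<lambda>i j. ?M $$ (i,j)) l" using eig_jnf[OF M] by blast
  then obtain v where v: "\<exists>i<N. v i \<noteq> 0" "\<forall>i<N. mvec N (\<lambda>i j. ?M $$ (i,j)) v i = l * v i"
    unfolding eig_def by blast
  have "mvec N (\<lambda>i j. ?M $$ (i,j)) v i = mvec N A v i" if "i < N" for i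
    using that by (simp add: mvec_def)
  then have "\<forall>i<N. mvec N A v i = l * v i" using v(2) by simp
  then show ?thesis using v(1) unfolding eig_def by blast
qed




lemma mvec_scal: "mvec N A (\<lambda>i. c * v i) i = c * mvec N A v i"
  unfolding mvec_def by (simp add: sum_distrib_left algebra_simps)

lemma hh_zero: "hh N u (\<lambda>_. 0) i = 0"
  unfolding hh_def ipr_def by simp

lemma ipr_split: "ipr (Suc M) w w' = cnj (w 0) * w' 0 + ipr M (\<lambda>k. w (Suc k)) (\<lambda>k. w' (Suc k))"
  unfolding ipr_def by (simp only: sum.lessThan_Suc_shift)

lemma mvec_split: "mvec (Suc M) B w i = B i 0 * w 0 + (\<Sum>j<M. B i (Suc j) * w (Suc j))"
  unfolding mvec_def by (simp only: sum.lessThan_Suc_shift)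

lemma norm_split: "(\<Sum>i<Suc M. (cmod (w i))^2) = (cmod (w 0))^2 + (\<Sum>i<M. (cmod (w (Suc i)))^2)"
  by (simp only: sum.lessThan_Suc_shift)

lemma householder_target:
  assumes x: "ipr N x x = 1" and N: "N > 0"
  defines "p \<equiv> (if x 0 = 0 then 1 else x 0 / of_real (cmod (x 0)))"
  defines "f \<equiv> (\<lambda>k. if k = 0 then p else (0::complex))"
  defines "u \<equiv> (\<lambda>k. x k - f k)"
  shows "i < N \<Longrightarrow> hh N u f i = x i" and "p \<noteq> 0"
proof -
  have cmp: "cmod p = 1" by (cases "x 0 = 0") (auto simp: p_def norm_divide)
  have cp: "cnj p * p = 1"
    using complex_norm_square[of p] cmp by (simp add: mult.commute)
  show "p \<noteq> 0" using cp by auto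
  define r where "r = cnj (x 0) * p"
  have rr: "r = of_real (cmod (x 0))"
  proof (cases "x 0 = 0")
    case True then show ?thesis by (simp add: r_def p_def)
  next
    case False
    then have "r = cnj (x 0) * x 0 / of_real (cmod (x 0))" by (simp add: r_def p_def)
    also have "\<dots> = of_real ((cmod (x 0))^2) / of_real (cmod (x 0))"
      by (metis complex_norm_square mult.commute norm_complex_def)
    also have "\<dots> = of_real (cmod (x 0))" using False by (simp add: power2_eq_square)
    finally show ?thesis .
  qed
  have ipf: "ipr N u f = r - 1"
  proof -
    have "ipr N u f = (\<Sum>k<N. if k = 0 then cnj (u 0) * p else 0)"
      unfolding ipr_def by (intro sum.cong) (auto simp: f_def)
    also have "\<dots> = cnj (u 0) * p" using N by simp
    also have "\<dots> = r - 1" using cp by (simp add: u_def f_def r_def algebra_simps)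
    finally show ?thesis .
  qed
  have ipxf: "ipr N x f = r" 
  proof -
    have "ipr N x f = (\<Sum>k<N. if k = 0 then cnj (x 0) * p else 0)"
      unfolding ipr_def by (intro sum.cong) (auto simp: f_def)
    also have "\<dots> = r" using N by (simp add: r_def)
    finally show ?thesis .
  qed
  have ipff: "ipr N f f = 1"
  proof -
    have "ipr N f f = (\<Sum>k<N. if k = 0 then cnj p * p else 0)"
      unfolding ipr_def by (intro sum.cong) (auto simp: f_def)
    also have "\<dots> = 1" using N cp by simp
    finally show ?thesis .
  qed
  have rcnj: "cnj r = r" by (simp add: rr)
  have ipfx: "ipr N f x = r" using ipxf ipr_cnj[of N x f] rcnj by metis
  have q: "ipr N u u = 2 - 2 * r"
  proof -
    have "ipr N u u = ipr N x x - ipr N x f - ipr N f x + ipr N f f"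
      unfolding ipr_def u_def by (simp add: algebra_simps sum_subtractf sum.distrib)
    then show ?thesis using x ipxf ipfx ipff by simp
  qed
  assume i: "i < N"
  show "hh N u f i = x i"
  proof (cases "r = 1")
    case False
    then have "2 - 2 * r \<noteq> 0" by simp
    then have "(2 / ipr N u u) * ipr N u f = - 1" unfolding q ipf
      by (simp add: field_simps)
    then show ?thesis unfolding hh_alt by (simp add: u_def)
  next
    case True
    then have "ipr N u u = 0" using q by simp
    then have "complex_of_real (\<Sum>k<N. (cmod (u k))^2) = 0" using ipr_norm[of N u] by metis
    then have "(\<Sum>k<N. (cmod (u k))^2) = 0" by (simp only: of_real_eq_0_iff)
    then have "\<forall>k<N. u k = 0" by (simp add: sum_nonneg_eq_0_iff)
    then have "x i = f i" using i by (simp add: u_def)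
    then show ?thesis by (simp add: hh_def \<open>ipr N u u = 0\<close>)
  qed
qed




lemma ipr_norm_eq: "ipr N v v = ipr N w w \<Longrightarrow> (\<Sum>i<N. (cmod (v i))^2) = (\<Sum>i<N. (cmod (w i))^2)"
  by (simp only: ipr_norm of_real_eq_iff)

lemma numrange:
  "iso N A \<Longrightarrow> (\<forall>l. eig N A l \<longrightarrow> \<gamma> \<le> Re l) \<Longrightarrow>
   \<gamma> * (\<Sum>i<N. (cmod (v i))^2) \<le> Re (ipr N v (mvec N A v))"
proof (induction N arbitrary: A v)
  case 0
  then show ?case by (simp add: ipr_def)
next
  case (Suc M)
  let ?N = "Suc M"
  note isoA = Suc.prems(1) and eigA = Suc.prems(2)
  obtain l0 where "eig ?N A l0" using eig_exists[of ?N A] by auto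
  then obtain x0 where x0: "\<exists>i<?N. x0 i \<noteq> 0" "\<forall>i<?N. mvec ?N A x0 i = l0 * x0 i"
    unfolding eig_def by blast
  have l0g: "\<gamma> \<le> Re l0" using eigA \<open>eig ?N A l0\<close> by blast
  define nx where "nx = (\<Sum>i<?N. (cmod (x0 i))^2)"
  have nxpos: "nx > 0"
  proof -
    obtain i where "i < ?N" "x0 i \<noteq> 0" using x0(1) by blast
    then have "(cmod (x0 i))^2 > 0" by simp
    moreover have "(cmod (x0 i))^2 \<le> nx" unfolding nx_def using \<open>i < ?N\<close> by (intro member_le_sum) auto
    ultimately show ?thesis by linarith
  qed
  define sc where "sc = 1 / sqrt nx"
  define x where "x = (\<lambda>i. complex_of_real sc * x0 i)"
  have xn: "ipr ?N x x = 1"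
  proof -
    have "(\<Sum>i<?N. (cmod (x i))^2) = sc^2 * nx"
      by (simp add: x_def nx_def norm_mult power_mult_distrib sum_distrib_left distrib_left)
    also have "\<dots> = 1" using nxpos by (simp add: sc_def power_divide)
    finally show ?thesis by (simp add: ipr_norm)
  qed
  have xev: "\<forall>i<?N. mvec ?N A x i = l0 * x i"
    using x0(2) by (simp add: x_def mvec_scal)
  define p where "p = (if x 0 = 0 then 1 else x 0 / of_real (cmod (x 0)))"
  define f where "f = (\<lambda>k::nat. if k = 0 then p else (0::complex))"
  define u where "u = (\<lambda>k. x k - f k)"
  have hf: "\<And>i. i < ?N \<Longrightarrow> hh ?N u f i = x i" and p0: "p \<noteq> 0"
    using householder_target[OF xn] unfolding p_def f_def u_def by auto
  define B where "B = mmul ?N (hm ?N u) (mmul ?N A (hm ?N u))"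
  have Bv: "mvec ?N B v i = hh ?N u (mvec ?N A (hh ?N u v)) i" if "i < ?N" for v i
  proof -
    have "mvec ?N B v i = mvec ?N (hm ?N u) (mvec ?N A (mvec ?N (hm ?N u) v)) i"
      by (simp add: B_def mvec_mmul)
    also have "\<dots> = hh ?N u (mvec ?N A (mvec ?N (hm ?N u) v)) i" using that by (rule mvec_hm)
    also have "mvec ?N A (mvec ?N (hm ?N u) v) = mvec ?N A (hh ?N u v)"
      by (rule mvec_cong) (rule mvec_hm)
    finally show ?thesis .
  qed
  have isoB: "iso ?N B"
    unfolding iso_def
  proof (intro allI)
    fix v w
    have "ipr ?N (mvec ?N B v) (mvec ?N B w) = ipr ?N (hh ?N u (mvec ?N A (hh ?N u v))) (hh ?N u (mvec ?N A (hh ?N u w)))"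
      by (rule ipr_cong) (simp_all add: Bv)
    also have "\<dots> = ipr ?N (mvec ?N A (hh ?N u v)) (mvec ?N A (hh ?N u w))" by (rule hh_iso)
    also have "\<dots> = ipr ?N (hh ?N u v) (hh ?N u w)" using isoA by (simp add: iso_def)
    also have "\<dots> = ipr ?N v w" by (rule hh_iso)
    finally show "ipr ?N (mvec ?N B v) (mvec ?N B w) = ipr ?N v w" .
  qed
  have Bf: "mvec ?N B f i = l0 * f i" if i: "i < ?N" for i
  proof -
    have "mvec ?N A (hh ?N u f) = mvec ?N A x" by (rule mvec_cong) (rule hf)
    then have "mvec ?N B f i = hh ?N u (mvec ?N A x) i" using Bv[OF i] by simp
    also have "\<dots> = hh ?N u (\<lambda>j. l0 * x j) i" using i by (intro hh_cong) (simp_all add: xev)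
    also have "\<dots> = l0 * hh ?N u x i" by (rule hh_scal)
    also have "hh ?N u x i = hh ?N u (hh ?N u f) i" using i by (intro hh_cong) (simp_all add: hf)
    also have "\<dots> = f i" by (rule hh_invol)
    finally show ?thesis .
  qed
  have B0: "B i 0 = (if i = 0 then l0 else 0)" if i: "i < ?N" for i
  proof -
    have "mvec ?N B f i = B i 0 * p"
      by (simp add: mvec_def f_def if_distrib sum.delta' cong: if_cong)
    then have "B i 0 * p = l0 * f i" using Bf[OF i] by simp
    then show ?thesis using p0 by (cases "i = 0") (auto simp: f_def)
  qed
  define e0 where "e0 = (\<lambda>k::nat. if k = 0 then 1 else (0::complex))"
  have Be0: "mvec ?N B e0 i = (if i = 0 then l0 else 0)" if "i < ?N" for i
    using B0[OF that] by (simp add: mvec_def e0_def if_distrib sum.delta' cong: if_cong)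
  have ip_e0: "ipr ?N (mvec ?N B e0) w = cnj l0 * w 0" for w
  proof -
    have "ipr ?N (mvec ?N B e0) w = (\<Sum>i<?N. if i = 0 then cnj l0 * w 0 else 0)"
      unfolding ipr_def by (intro sum.cong) (auto simp: Be0)
    then show ?thesis by simp
  qed
  have l0n: "cnj l0 * l0 = 1"
  proof -
    have "ipr ?N (mvec ?N B e0) (mvec ?N B e0) = ipr ?N e0 e0" using isoB by (simp add: iso_def)
    also have "ipr ?N e0 e0 = 1" by (simp add: ipr_def e0_def if_distrib sum.delta' cong: if_cong)
    finally show ?thesis using ip_e0 Be0 by simp
  qed
  then have l0nz: "l0 \<noteq> 0" by auto
  have Brow: "B 0 k = 0" if k: "0 < k" "k < ?N" for k
  proof -
    define ek where "ek = (\<lambda>j::nat. if j = k then 1 else (0::complex))"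
    have "ipr ?N (mvec ?N B e0) (mvec ?N B ek) = ipr ?N e0 ek" using isoB by (simp add: iso_def)
    also have "\<dots> = 0" unfolding ipr_def e0_def ek_def using k by (intro sum.neutral) auto
    finally have "cnj l0 * mvec ?N B ek 0 = 0" using ip_e0 by simp
    moreover have "mvec ?N B ek 0 = B 0 k" using k by (simp add: mvec_def ek_def if_distrib sum.delta' cong: if_cong)
    ultimately show ?thesis using l0nz by simp
  qed
  define A' where "A' = (\<lambda>i j. B (Suc i) (Suc j))"
  define zz where "zz y = (\<lambda>k. if k = 0 then 0 else y (k - 1))" for y :: "nat \<Rightarrow> complex"
  have Bz0: "mvec ?N B (zz y) 0 = 0" for y
    unfolding mvec_split by (simp add: zz_def Brow)
  have BzS: "mvec ?N B (zz y) (Suc i) = mvec M A' y i" for y i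
    unfolding mvec_split by (simp add: zz_def A'_def mvec_def)
  have isoA': "iso M A'"
    unfolding iso_def
  proof (intro allI)
    fix y y'
    have "ipr ?N (mvec ?N B (zz y)) (mvec ?N B (zz y')) = ipr M (mvec M A' y) (mvec M A' y')"
      unfolding ipr_split by (simp add: Bz0 BzS)
    moreover have "ipr ?N (zz y) (zz y') = ipr M y y'"
      unfolding ipr_split by (simp add: zz_def)
    moreover have "ipr ?N (mvec ?N B (zz y)) (mvec ?N B (zz y')) = ipr ?N (zz y) (zz y')"
      using isoB by (simp add: iso_def)
    ultimately show "ipr M (mvec M A' y) (mvec M A' y') = ipr M y y'" by simp
  qed
  have eigA': "\<gamma> \<le> Re \<mu>" if "eig M A' \<mu>" for \<mu>
  proof -
    from that obtain y where y: "\<exists>i<M. y i \<noteq> 0" "\<forall>i<M. mvec M A' y i = \<mu> * y i"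
      unfolding eig_def by blast
    define z where "z = zz y"
    have Bzz: "mvec ?N B z i = \<mu> * z i" if "i < ?N" for i
    proof (cases i)
      case 0
      then have "mvec ?N B z i = 0" using Bz0[of y] by (simp add: z_def)
      then show ?thesis by (simp add: 0 z_def zz_def)
    next
      case (Suc j)
      then have "mvec ?N B z i = mvec M A' y j" using BzS[of y j] by (simp add: z_def)
      then show ?thesis using that y(2) Suc by (simp add: z_def zz_def)
    qed
    define w where "w = hh ?N u z"
    have Aw: "mvec ?N A w i = \<mu> * w i" if i: "i < ?N" for i
    proof -
      have "hh ?N u (mvec ?N B z) i = hh ?N u (hh ?N u (mvec ?N A (hh ?N u z))) i"
        using i by (intro hh_cong) (simp_all add: Bv)
      also have "\<dots> = mvec ?N A w i" by (simp add: hh_invol w_def)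
      finally have "mvec ?N A w i = hh ?N u (mvec ?N B z) i" by simp
      also have "\<dots> = hh ?N u (\<lambda>j. \<mu> * z j) i" using i by (intro hh_cong) (simp_all add: Bzz)
      also have "\<dots> = \<mu> * w i" by (simp add: hh_scal w_def)
      finally show ?thesis .
    qed
    have "\<exists>i<?N. w i \<noteq> 0"
    proof (rule ccontr)
      assume "\<not> (\<exists>i<?N. w i \<noteq> 0)"
      then have w0: "\<forall>i<?N. w i = 0" by simp
      obtain j where j: "j < M" "y j \<noteq> 0" using y(1) by blast
      have "z (Suc j) = hh ?N u w (Suc j)" by (simp add: w_def hh_invol)
      also have "\<dots> = hh ?N u (\<lambda>_. 0) (Suc j)" using j w0 by (intro hh_cong) auto
      also have "\<dots> = 0" by (rule hh_zero)
      finally show False using j by (simp add: z_def zz_def)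
    qed
    then have "eig ?N A \<mu>" unfolding eig_def using Aw by blast
    then show ?thesis using eigA by blast
  qed
  have IH: "\<gamma> * (\<Sum>i<M. (cmod (y i))^2) \<le> Re (ipr M y (mvec M A' y))" for y
    using Suc.IH[OF isoA'] eigA' by blast
  define w where "w = hh ?N u v"
  have e1: "ipr ?N v (mvec ?N A v) = ipr ?N w (mvec ?N B w)"
  proof -
    have "ipr ?N w (mvec ?N B w) = ipr ?N (hh ?N u v) (hh ?N u (mvec ?N A v))"
    proof (rule ipr_cong)
      fix i assume i: "i < ?N"
      have "mvec ?N B w i = hh ?N u (mvec ?N A (hh ?N u w)) i" using Bv[OF i] .
      also have "mvec ?N A (hh ?N u w) = mvec ?N A v" by (rule mvec_cong) (simp add: w_def hh_invol)
      finally show "mvec ?N B w i = hh ?N u (mvec ?N A v) i" .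
    qed (simp add: w_def)
    also have "\<dots> = ipr ?N v (mvec ?N A v)" by (rule hh_iso)
    finally show ?thesis by simp
  qed
  have e2: "(\<Sum>i<?N. (cmod (v i))^2) = (\<Sum>i<?N. (cmod (w i))^2)"
    by (rule ipr_norm_eq) (simp add: w_def hh_iso)
  define w' where "w' = (\<lambda>k. w (Suc k))"
  have Bw0: "mvec ?N B w 0 = l0 * w 0"
    unfolding mvec_split using B0[of 0] by (simp add: Brow)
  have BwS: "mvec ?N B w (Suc k) = mvec M A' w' k" if "k < M" for k
    unfolding mvec_split using B0[of "Suc k"] that by (simp add: A'_def w'_def mvec_def)
  have e3: "ipr ?N w (mvec ?N B w) = cnj (w 0) * (l0 * w 0) + ipr M w' (mvec M A' w')"
    unfolding ipr_split Bw0 w'_def by (intro arg_cong2[where f="(+)"] refl ipr_cong) (simp_all add: BwS w'_def)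
  have e4: "Re (cnj (w 0) * (l0 * w 0)) = (cmod (w 0))^2 * Re l0"
  proof -
    have "cnj (w 0) * (l0 * w 0) = l0 * (w 0 * cnj (w 0))" by (simp add: algebra_simps)
    also have "w 0 * cnj (w 0) = of_real ((cmod (w 0))^2)" by (metis complex_norm_square norm_complex_def)
    finally have "cnj (w 0) * (l0 * w 0) = l0 * of_real ((cmod (w 0))^2)" .
    moreover have "Re (l0 * of_real r) = r * Re l0" for r by simp
    ultimately show ?thesis by metis
  qed
  have "\<gamma> * (cmod (w 0))^2 \<le> (cmod (w 0))^2 * Re l0"
    using l0g by (simp add: mult.commute mult_right_mono)
  moreover have "\<gamma> * (\<Sum>i<M. (cmod (w' i))^2) \<le> Re (ipr M w' (mvec M A' w'))" by (rule IH)
  ultimately have "\<gamma> * ((cmod (w 0))^2 + (\<Sum>i<M. (cmod (w' i))^2)) \<le> Re (ipr ?N w (mvec ?N B w))"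
    unfolding e3 using e4 by (simp add: distrib_left)
  then show ?case unfolding e1 e2 norm_split[of w M] w'_def .
qed




lemma compl_entry:
  fixes K :: "nat \<Rightarrow> complex mat"
  assumes K: "\<forall>j<d. K j \<in> carrier_mat n n"
    and C: "mat n n (\<lambda>(i, k). \<Sum>j<d. (mat_adjoint (K j) * K j) $$ (i, k)) = 1\<^sub>m n"
    and ab: "a < n" "b < n"
  shows "(\<Sum>j<d. \<Sum>k<n. cnj (K j $$ (k,a)) * K j $$ (k,b)) = (if a = b then 1 else 0)"
proof -
  have "(\<Sum>j<d. (mat_adjoint (K j) * K j) $$ (a, b)) = (if a = b then 1 else 0)"
    using arg_cong[OF C, of "\<lambda>M. M $$ (a,b)"] ab by simp
  moreover have "(mat_adjoint (K j) * K j) $$ (a, b) = (\<Sum>k<n. cnj (K j $$ (k,a)) * K j $$ (k,b))" if "j < d" for j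
    using K that ab by (auto simp: scalar_prod_def atLeast0LessThan intro!: sum.cong)
  ultimately show ?thesis by simp
qed

lemma alpha_le1:
  fixes K :: "nat \<Rightarrow> complex mat"
  assumes K: "\<forall>j<d. K j \<in> carrier_mat n n" and n: "n \<ge> 1" and d: "d \<ge> 1"
    and C: "mat n n (\<lambda>(i, k). \<Sum>j<d. (mat_adjoint (K j) * K j) $$ (i, k)) = 1\<^sub>m n"
    and K0: "K 0 = \<alpha> \<cdot>\<^sub>m 1\<^sub>m n"
  shows "cmod \<alpha> \<le> 1"
proof -
  have Rc: "Re (cnj z * z) = (cmod z)^2" for z :: complex by (subst mult.commute) (simp add: complex_mult_cnj cmod_power2)
  have "K 0 $$ (0,0) = \<alpha>" using n K0 by simp
  then have "(cmod \<alpha>)^2 = (cmod (K 0 $$ (0,0)))^2" by simp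
  also have "\<dots> \<le> (\<Sum>k<n. (cmod (K 0 $$ (k,0)))^2)"
    using n by (intro member_le_sum) auto
  also have "\<dots> \<le> (\<Sum>j<d. \<Sum>k<n. (cmod (K j $$ (k,0)))^2)"
    using d by (intro member_le_sum[of 0 "{..<d}" "\<lambda>j. \<Sum>k<n. (cmod (K j $$ (k,0)))^2"] sum_nonneg) auto
  also have "\<dots> = Re (\<Sum>j<d. \<Sum>k<n. cnj (K j $$ (k,0)) * K j $$ (k,0))" by (simp only: Re_sum Rc)
  also have "\<dots> = 1"
    using compl_entry[OF K C, of 0 0] n by simp
  finally have "(cmod \<alpha>)^2 \<le> 1" by simp
  then show ?thesis by (simp add: power_le_one_iff abs_le_square_iff)
qed

lemma iso_unitary:
  assumes U: "unitary_mat N U"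
  shows "iso N (\<lambda>i j. U $$ (i,j))"
  unfolding iso_def
proof (intro allI)
  fix v w
  have car: "U \<in> carrier_mat N N" and UU: "mat_adjoint U * U = 1\<^sub>m N" using U by (auto simp: unitary_mat_def)
  have e: "(\<Sum>i<N. cnj (U $$ (i,j)) * U $$ (i,k)) = (if j = k then 1 else 0)" if "j < N" "k < N" for j k
  proof -
    have "(mat_adjoint U * U) $$ (j,k) = (\<Sum>i<N. cnj (U $$ (i,j)) * U $$ (i,k))"
      using car that by (auto simp: scalar_prod_def atLeast0LessThan intro!: sum.cong)
    then show ?thesis using UU that by simp
  qed
  have "ipr N (mvec N (\<lambda>i j. U $$ (i,j)) v) (mvec N (\<lambda>i j. U $$ (i,j)) w)
     = (\<Sum>i<N. \<Sum>j<N. \<Sum>k<N. cnj (v j) * w k * (cnj (U $$ (i,j)) * U $$ (i,k)))"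
    unfolding ipr_def mvec_def by (simp add: sum_distrib_left sum_distrib_right algebra_simps)
  also have "\<dots> = (\<Sum>j<N. \<Sum>i<N. \<Sum>k<N. cnj (v j) * w k * (cnj (U $$ (i,j)) * U $$ (i,k)))"
    by (rule sum.swap)
  also have "\<dots> = (\<Sum>j<N. \<Sum>k<N. \<Sum>i<N. cnj (v j) * w k * (cnj (U $$ (i,j)) * U $$ (i,k)))"
    by (rule sum.cong[OF refl], rule sum.swap)
  also have "\<dots> = (\<Sum>j<N. \<Sum>k<N. cnj (v j) * w k * (if j = k then 1 else 0))"
    by (intro sum.cong refl) (simp add: sum_distrib_left[symmetric] e)
  also have "\<dots> = ipr N v w"
    unfolding ipr_def by (intro sum.cong refl) (simp add: if_distrib sum.delta cong: if_cong)
  finally show "ipr N (mvec N (\<lambda>i j. U $$ (i,j)) v) (mvec N (\<lambda>i j. U $$ (i,j)) w) = ipr N v w" .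
qed

lemma eig_unit_norm:
  assumes "iso N A" "eig N A l"
  shows "cmod l = 1"
proof -
  obtain v where v: "\<exists>i<N. v i \<noteq> 0" "\<forall>i<N. mvec N A v i = l * v i" using assms(2) unfolding eig_def by blast
  have "ipr N (mvec N A v) (mvec N A v) = ipr N v v" using assms(1) by (simp add: iso_def)
  moreover have "ipr N (mvec N A v) (mvec N A v) = ipr N (\<lambda>i. l * v i) (\<lambda>i. l * v i)"
    by (rule ipr_cong) (simp_all add: v(2))
  moreover have "ipr N (\<lambda>i. l * v i) (\<lambda>i. l * v i) = (cnj l * l) * ipr N v v"
    unfolding ipr_def by (simp add: sum_distrib_left algebra_simps)
  moreover have "ipr N v v \<noteq> 0"
  proof -
    obtain i where "i < N" "v i \<noteq> 0" using v(1) by blast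
    then have "(cmod (v i))^2 > 0" by simp
    moreover have "(cmod (v i))^2 \<le> (\<Sum>i<N. (cmod (v i))^2)" using \<open>i < N\<close> by (intro member_le_sum) auto
    ultimately have "(\<Sum>i<N. (cmod (v i))^2) \<noteq> 0" by linarith
    then show ?thesis using ipr_norm[of N v] by (metis of_real_eq_0_iff)
  qed
  ultimately have "cnj l * l = 1" by (metis mult_cancel_right1)
  then have "(cmod l)^2 = 1" by (metis complex_norm_square mult.commute norm_complex_def of_real_eq_1_iff)
  then show ?thesis using norm_ge_zero[of l] by (auto simp: power2_eq_1_iff)
qed




lemma cost_lower:
  fixes K :: "nat \<Rightarrow> complex mat"
  assumes n: "n \<ge> 1" and d: "d \<ge> 1"
    and K: "\<forall>j<d. K j \<in> carrier_mat n n"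
    and C: "mat n n (\<lambda>(i, k). \<Sum>j<d. (mat_adjoint (K j) * K j) $$ (i, k)) = 1\<^sub>m n"
    and K0: "K 0 = \<alpha> \<cdot>\<^sub>m 1\<^sub>m n"
    and tr: "\<forall>j. 1 \<le> j \<and> j < d \<longrightarrow> mat_trace (K j) = 0"
    and m: "m \<ge> 1" and U: "unitary_mat (m*n) U"
    and dil: "\<forall>\<rho>. density_mat n \<rho> \<longrightarrow> kraus_channel n d K \<rho> = ptrace_B m n (U * anc_state m n \<rho> * mat_adjoint U)"
  shows "arccos (cmod \<alpha>) \<le> unitary_cost U"
proof -
  define N where "N = m * n"
  have N: "N \<ge> 1" using n m by (simp add: N_def)
  have nN: "n \<le> N" using m by (simp add: N_def)
  have car: "U \<in> carrier_mat N N" using U by (simp add: unitary_mat_def N_def)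
  define a where "a = cmod \<alpha>"
  have a1: "a \<le> 1" using alpha_le1[OF K n d C K0] by (simp add: a_def)
  have a0: "0 \<le> a" by (simp add: a_def)
  define A where "A = (\<lambda>i j. U $$ (i,j))"
  have isoA: "iso N A" unfolding A_def N_def by (rule iso_unitary[OF U])
  define S where "S = (\<lambda>z. \<bar>Arg z\<bar>) ` spectrum U"
  have Sfin: "finite S" using card_finite_spectrum(1)[OF car] by (simp add: S_def)
  have Sne: "S \<noteq> {}" using spectrum_non_empty[OF car] N by (simp add: S_def)
  have costS: "unitary_cost U = Max S"
    unfolding unitary_cost_def S_def spectrum_def by (rule arg_cong[where f=Max]) auto
  define t where "t = Max S"
  have t0: "0 \<le> t" using Sne Sfin unfolding t_def S_def by (auto simp: Max_ge_iff)
  have absA: "\<bar>Arg z\<bar> \<le> pi" for z using mpi_less_Arg[of z] Arg_le_pi[of z] by linarith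
  have tpi: "t \<le> pi" using Sne Sfin absA unfolding t_def S_def by (auto simp: Max_le_iff)
  show ?thesis
  proof (rule ccontr)
    assume "\<not> ?thesis"
    then have tlt: "t < arccos a" using costS by (simp add: t_def a_def)
    have ev: "cos t \<le> Re l" if "eig N A l" for l
    proof -
      have "eigenvalue U l" using that eig_jnf[OF car] by (simp add: A_def)
      then have "\<bar>Arg l\<bar> \<in> S" by (auto simp: S_def spectrum_def)
      then have le: "\<bar>Arg l\<bar> \<le> t" using Sfin by (simp add: t_def)
      have "cmod l = 1" using eig_unit_norm[OF isoA that] .
      moreover have "Re l = Re (rcis (cmod l) (Arg l))" by (simp only: rcis_cmod_Arg)
      ultimately have "Re l = cos (Arg l)" by (simp only: Re_rcis mult_1)
      also have "\<dots> = cos \<bar>Arg l\<bar>" by simp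
      also have "\<dots> \<ge> cos t" using le t0 tpi
        using absA[of l] by (subst cos_mono_le_eq) auto
      finally show ?thesis .
    qed
    have diag: "cos t \<le> Re (U $$ (p,p))" if p: "p < n" for p
    proof -
      define e where "e = (\<lambda>k::nat. if k = p then 1 else (0::complex))"
      have pN: "p < N" using p nN by simp
      have "cos t * (\<Sum>i<N. (cmod (e i))^2) \<le> Re (ipr N e (mvec N A e))"
        using numrange[OF isoA] ev by blast
      moreover have "(\<Sum>i<N. (cmod (e i))^2) = 1"
      proof -
        have "(\<Sum>i<N. (cmod (e i))^2) = (\<Sum>i<N. if i = p then 1 else 0)"
          by (intro sum.cong) (auto simp: e_def)
        then show ?thesis using pN by simp
      qed
      moreover have "mvec N A e p = U $$ (p,p)"
        using pN by (simp add: mvec_def e_def A_def if_distrib sum.delta' cong: if_cong)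
      moreover have "ipr N e (mvec N A e) = mvec N A e p"
      proof -
        have "ipr N e (mvec N A e) = (\<Sum>i<N. if i = p then mvec N A e i else 0)"
          unfolding ipr_def by (intro sum.cong) (auto simp: e_def)
        then show ?thesis using pN by simp
      qed
      ultimately show ?thesis by simp
    qed
    have "real n * cos t = (\<Sum>p<n. cos t)" by simp
    also have "\<dots> \<le> (\<Sum>p<n. Re (U $$ (p,p)))" by (intro sum_mono diag) simp
    also have "\<dots> = Re (\<Sum>p<n. U $$ (p,p))" by (simp add: Re_sum)
    also have "\<dots> \<le> cmod (\<Sum>p<n. U $$ (p,p))" by (rule complex_Re_le_cmod)
    also have "\<dots> \<le> real n * a"
      using trace_bound[OF K d K0 tr, of U m] car dil m by (simp add: N_def a_def)
    finally have "cos t \<le> a" using n by simp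
    moreover have "cos (arccos a) < cos t"
      using tlt t0 a0 a1 arccos_lbound[of a] arccos_ubound[of a]
      by (subst cos_mono_less_eq) auto
    ultimately show False using a0 a1 by simp
  qed
qed




locale constr =
  fixes n d :: nat and K :: "nat \<Rightarrow> complex mat" and \<alpha> :: complex
  assumes n: "n \<ge> 1" and d: "d \<ge> 1"
    and K: "\<forall>j<d. K j \<in> carrier_mat n n"
    and C: "mat n n (\<lambda>(i, k). \<Sum>j<d. (mat_adjoint (K j) * K j) $$ (i, k)) = 1\<^sub>m n"
    and K0: "K 0 = \<alpha> \<cdot>\<^sub>m 1\<^sub>m n"
begin

definition "c = cmod \<alpha>"
definition "s = sqrt (1 - c^2)"
definition "\<omega> = (if \<alpha> = 0 then 1 else cnj \<alpha> / of_real c)"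
definition "N = d * n"
definition "E i a = (if i = a then 1 else (0::complex))"
definition "T i a = (if n \<le> i then \<omega> * K (i div n) $$ (i mod n, a) else 0)"
definition "V i a = (- \<i> / of_real s) * T i a"
definition "W i a = E i a - V i a"
definition "P i j = (\<Sum>a<n. W i a * cnj (W j a))"
definition "Z i j = \<i> * of_real s * ((if i = j then 1 else 0) - P i j)"
definition "Uf i j = of_real c * (if i = j then 1 else 0) + Z i j"

lemma c_le1: "c \<le> 1" unfolding c_def by (rule alpha_le1[OF K n d C K0])
lemma c_ge0: "c \<ge> 0" unfolding c_def by simp
lemma cs: "c^2 + s^2 = 1"
proof -
  have "c^2 \<le> 1" using power_le_one[OF c_ge0 c_le1] .
  then show ?thesis unfolding s_def by simp
qed
lemma s_ge0: "s \<ge> 0"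
proof -
  have "c^2 \<le> 1" using power_le_one[OF c_ge0 c_le1] .
  then show ?thesis unfolding s_def by simp
qed
lemma s2: "complex_of_real (s^2) = 1 - complex_of_real (c^2)"
proof -
  have "s^2 = 1 - c^2" using cs by simp
  then show ?thesis by (simp only: of_real_diff of_real_1)
qed
lemma omega_norm: "cnj \<omega> * \<omega> = 1"
proof (cases "\<alpha> = 0")
  case True then show ?thesis unfolding \<omega>_def by simp
next
  case False
  then have "cmod \<omega> = 1" by (simp add: \<omega>_def c_def norm_divide)
  then show ?thesis using complex_norm_square[of \<omega>] by (simp add: mult.commute)
qed
lemma omega_alpha: "\<omega> * \<alpha> = of_real c"
proof (cases "\<alpha> = 0")
  case True then show ?thesis unfolding \<omega>_def c_def by simp
next
  case False
  then have "\<omega> * \<alpha> = (cnj \<alpha> * \<alpha>) / of_real c" by (simp add: \<omega>_def)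
  also have "cnj \<alpha> * \<alpha> = of_real (c^2)" unfolding c_def using complex_norm_square[of \<alpha>] by (simp add: mult.commute)
  finally show ?thesis using False by (simp add: c_def power2_eq_square)
qed

lemma T_low: "i < n \<Longrightarrow> T i a = 0" by (simp add: T_def)
lemma V_low: "i < n \<Longrightarrow> V i a = 0" by (simp add: V_def T_low)

lemma nN: "n \<le> N" using d by (simp add: N_def)

lemma TT: assumes "a < n" "b < n"
  shows "(\<Sum>i<N. cnj (T i a) * T i b) = of_real (s^2) * (if a = b then 1 else 0)"
proof -
  have "(\<Sum>i<N. cnj (T i a) * T i b) = (\<Sum>j<d. \<Sum>r<n. cnj (T (j*n+r) a) * T (j*n+r) b)"
    unfolding N_def by (rule sum_blocks)
  also have "\<dots> = (\<Sum>j<d. if j = 0 then 0 else \<Sum>r<n. cnj (K j $$ (r,a)) * K j $$ (r,b))"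
  proof (rule sum.cong[OF refl])
    fix j assume "j \<in> {..<d}"
    show "(\<Sum>r<n. cnj (T (j*n+r) a) * T (j*n+r) b) = (if j = 0 then 0 else \<Sum>r<n. cnj (K j $$ (r,a)) * K j $$ (r,b))"
    proof (cases "j = 0")
      case True then show ?thesis by (simp add: T_low)
    next
      case False
      have "(\<Sum>r<n. cnj (T (j*n+r) a) * T (j*n+r) b) = (\<Sum>r<n. (cnj \<omega> * \<omega>) * (cnj (K j $$ (r,a)) * K j $$ (r,b)))"
      proof (rule sum.cong[OF refl])
        fix r assume r: "r \<in> {..<n}"
        have "n \<le> j*n + r" using False by (simp add: trans_le_add1)
        moreover have "(j*n+r) div n = j" "(j*n+r) mod n = r" using r by auto
        ultimately show "cnj (T (j*n+r) a) * T (j*n+r) b = (cnj \<omega> * \<omega>) * (cnj (K j $$ (r,a)) * K j $$ (r,b))"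
          by (simp add: T_def algebra_simps)
      qed
      then show ?thesis using False by (simp add: omega_norm)
    qed
  qed
  also have "\<dots> = (\<Sum>j<d. \<Sum>r<n. cnj (K j $$ (r,a)) * K j $$ (r,b)) - (\<Sum>r<n. cnj (K 0 $$ (r,a)) * K 0 $$ (r,b))"
  proof -
    have "(\<Sum>j<d. \<Sum>r<n. cnj (K j $$ (r,a)) * K j $$ (r,b)) =
      (\<Sum>r<n. cnj (K 0 $$ (r,a)) * K 0 $$ (r,b)) + (\<Sum>j\<in>{..<d}-{0}. \<Sum>r<n. cnj (K j $$ (r,a)) * K j $$ (r,b))"
      using d by (subst sum.remove[of _ 0]) auto
    moreover have "(\<Sum>j<d. if j = 0 then 0 else \<Sum>r<n. cnj (K j $$ (r,a)) * K j $$ (r,b)) =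
       (\<Sum>j\<in>{..<d}-{0}. \<Sum>r<n. cnj (K j $$ (r,a)) * K j $$ (r,b))"
      using d by (subst sum.remove[of _ 0]) (auto intro!: sum.cong)
    ultimately show ?thesis by simp
  qed
  also have "(\<Sum>r<n. cnj (K 0 $$ (r,a)) * K 0 $$ (r,b)) = (\<Sum>r<n. if r = a \<and> r = b then cnj \<alpha> * \<alpha> else 0)"
    using assms by (intro sum.cong) (auto simp: K0)
  also have "\<dots> = (if a = b then cnj \<alpha> * \<alpha> else 0)"
    using assms by (cases "a = b") (auto simp: sum.delta' intro: sum.neutral)
  also have "cnj \<alpha> * \<alpha> = of_real (c^2)" unfolding c_def using complex_norm_square[of \<alpha>] by (simp add: mult.commute)
  also have "(\<Sum>j<d. \<Sum>r<n. cnj (K j $$ (r,a)) * K j $$ (r,b)) = (if a = b then 1 else 0)"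
    by (rule compl_entry[OF K C assms])
  finally have "(\<Sum>i<N. cnj (T i a) * T i b) = (if a = b then 1 else 0) - (if a = b then complex_of_real (c^2) else 0)" .
  moreover have "(complex_of_real s)^2 = 1 - (complex_of_real c)^2" using s2 by simp
  ultimately show ?thesis by (cases "a = b") simp_all
qed

end




lemma delta_mult: "(if a = b then 1 else 0) * (x::complex) = (if a = b then x else 0)" by simp
lemma mult_delta: "(x::complex) * (if a = b then 1 else 0) = (if a = b then x else 0)" by simp

context constr begin

lemma T_s0: assumes "s = 0" "i < N" "a < n" shows "T i a = 0"
proof -
  have "(\<Sum>i<N. cnj (T i a) * T i a) = 0" using TT[OF assms(3) assms(3)] assms(1) by simp
  then have "complex_of_real (\<Sum>i<N. (cmod (T i a))^2) = 0"
    using ipr_norm[of N "\<lambda>i. T i a"] by (simp add: ipr_def)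
  then have "(\<Sum>i<N. (cmod (T i a))^2) = 0" by (simp only: of_real_eq_0_iff)
  then show ?thesis using assms(2) by (simp add: sum_nonneg_eq_0_iff)
qed

lemma EE: "a < n \<Longrightarrow> b < n \<Longrightarrow> (\<Sum>i<N. cnj (E i a) * E i b) = (if a = b then 1 else 0)"
proof -
  assume ab: "a < n" "b < n"
  have "(\<Sum>i<N. cnj (E i a) * E i b) = (\<Sum>i<N. if i = a then (if a = b then 1 else 0) else 0)"
    by (intro sum.cong) (auto simp: E_def)
  also have "\<dots> = (if a = b then 1 else 0)" using ab nN by simp
  finally show ?thesis .
qed

lemma EV: "a < n \<Longrightarrow> (\<Sum>i<N. cnj (E i a) * V i b) = 0"
  by (intro sum.neutral) (auto simp: E_def V_low)

lemma VE: "a < n \<Longrightarrow> (\<Sum>i<N. cnj (V i b) * E i a) = 0"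
  by (intro sum.neutral) (auto simp: E_def V_low)

lemma VV: assumes "s \<noteq> 0" "a < n" "b < n"
  shows "(\<Sum>i<N. cnj (V i a) * V i b) = (if a = b then 1 else 0)"
proof -
  have "(\<Sum>i<N. cnj (V i a) * V i b) = (cnj (- \<i> / of_real s) * (- \<i> / of_real s)) * (\<Sum>i<N. cnj (T i a) * T i b)"
    by (simp add: V_def sum_distrib_left algebra_simps)
  also have "\<dots> = (1 / of_real (s^2)) * (of_real (s^2) * (if a = b then 1 else 0))"
    using TT[OF assms(2,3)] by (simp add: power2_eq_square)
  finally show ?thesis using assms(1) by simp
qed

lemma WW: assumes "s \<noteq> 0" "a < n" "b < n"
  shows "(\<Sum>i<N. cnj (W i a) * W i b) = 2 * (if a = b then 1 else 0)"
proof -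
  have "(\<Sum>i<N. cnj (W i a) * W i b) = (\<Sum>i<N. cnj (E i a) * E i b) - (\<Sum>i<N. cnj (E i a) * V i b)
      - (\<Sum>i<N. cnj (V i a) * E i b) + (\<Sum>i<N. cnj (V i a) * V i b)"
    by (simp add: W_def algebra_simps sum.distrib sum_subtractf)
  then show ?thesis using EE[OF assms(2,3)] EV[OF assms(2)] VE[OF assms(3)] VV[OF assms] by simp
qed

lemma PP: assumes "s \<noteq> 0" shows "(\<Sum>k<N. P i k * P k j) = 2 * P i j"
proof -
  have "(\<Sum>k<N. P i k * P k j) = (\<Sum>k<N. \<Sum>a<n. \<Sum>b<n. W i a * (cnj (W k a) * W k b) * cnj (W j b))"
    by (simp add: P_def sum_distrib_left sum_distrib_right algebra_simps)
  also have "\<dots> = (\<Sum>a<n. \<Sum>k<N. \<Sum>b<n. W i a * (cnj (W k a) * W k b) * cnj (W j b))"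
    by (rule sum.swap)
  also have "\<dots> = (\<Sum>a<n. \<Sum>b<n. \<Sum>k<N. W i a * (cnj (W k a) * W k b) * cnj (W j b))"
    by (rule sum.cong[OF refl], rule sum.swap)
  also have "\<dots> = (\<Sum>a<n. \<Sum>b<n. W i a * (2 * (if a = b then 1 else 0)) * cnj (W j b))"
    by (intro sum.cong refl) (simp add: sum_distrib_left[symmetric] sum_distrib_right[symmetric] WW[OF assms])
  also have "\<dots> = (\<Sum>a<n. 2 * (W i a * cnj (W j a)))"
  proof (rule sum.cong[OF refl])
    fix a assume a: "a \<in> {..<n}"
    have "(\<Sum>b<n. W i a * (2 * (if a = b then 1 else 0)) * cnj (W j b)) = (\<Sum>b<n. if a = b then 2 * (W i a * cnj (W j a)) else 0)"
      by (intro sum.cong) auto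
    then show "(\<Sum>b<n. W i a * (2 * (if a = b then 1 else 0)) * cnj (W j b)) = 2 * (W i a * cnj (W j a))"
      using a by simp
  qed
  also have "\<dots> = 2 * P i j" by (simp add: P_def sum_distrib_left)
  finally show ?thesis .
qed

lemma ZZ: assumes "i < N" "j < N"
  shows "(\<Sum>k<N. Z i k * Z k j) = - of_real (s^2) * (if i = j then 1 else 0)"
proof (cases "s = 0")
  case True then show ?thesis by (simp add: Z_def)
next
  case False
  define \<delta> where "\<delta> i j = (if i = j then 1 else (0::complex))" for i j :: nat
  have "(\<Sum>k<N. Z i k * Z k j) = (\<i> * of_real s)^2 * (\<Sum>k<N. (\<delta> i k - P i k) * (\<delta> k j - P k j))"
    by (simp add: Z_def \<delta>_def sum_distrib_left power2_eq_square algebra_simps)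
  also have "(\<Sum>k<N. (\<delta> i k - P i k) * (\<delta> k j - P k j)) =
      (\<Sum>k<N. \<delta> i k * \<delta> k j) - (\<Sum>k<N. \<delta> i k * P k j) - (\<Sum>k<N. P i k * \<delta> k j) + (\<Sum>k<N. P i k * P k j)"
    by (simp add: algebra_simps sum.distrib sum_subtractf)
  also have "(\<Sum>k<N. \<delta> i k * \<delta> k j) = \<delta> i j" using assms by (simp add: \<delta>_def delta_mult mult_delta sum.delta sum.delta')
  also have "(\<Sum>k<N. \<delta> i k * P k j) = P i j" using assms by (simp add: \<delta>_def delta_mult mult_delta sum.delta sum.delta')
  also have "(\<Sum>k<N. P i k * \<delta> k j) = P i j" using assms by (simp add: \<delta>_def delta_mult mult_delta sum.delta sum.delta')
  also have "(\<Sum>k<N. P i k * P k j) = 2 * P i j" by (rule PP[OF False])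
  finally show ?thesis by (simp add: \<delta>_def power2_eq_square algebra_simps)
qed

lemma Z_adj: "cnj (Z j i) = - Z i j"
proof -
  have "cnj (P j i) = P i j" by (simp add: P_def mult.commute)
  then show ?thesis by (simp add: Z_def algebra_simps)
qed

end




context constr begin

definition "Um = mat N N (\<lambda>(i,j). Uf i j)"

lemma Um_car: "Um \<in> carrier_mat N N" by (simp add: Um_def)

lemma Uf_unit1: assumes "i < N" "j < N"
  shows "(\<Sum>k<N. Uf i k * cnj (Uf j k)) = (if i = j then 1 else 0)"
proof -
  have "(\<Sum>k<N. Uf i k * cnj (Uf j k)) =
     (\<Sum>k<N. (of_real c * (if i = k then 1 else 0) + Z i k) * (of_real c * (if j = k then 1 else 0) - Z k j))"
    by (intro sum.cong refl) (simp add: Uf_def Z_adj)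
  also have "\<dots> = (\<Sum>k<N. of_real c * of_real c * ((if i = k then 1 else 0) * (if j = k then 1 else 0)))
      - (\<Sum>k<N. of_real c * ((if i = k then 1 else 0) * Z k j)) + (\<Sum>k<N. of_real c * (Z i k * (if j = k then 1 else 0)))
      - (\<Sum>k<N. Z i k * Z k j)"
    by (simp add: algebra_simps sum.distrib sum_subtractf)
  also have "\<dots> = of_real c * of_real c * (if i = j then 1 else 0) - of_real c * Z i j + of_real c * Z i j
      + of_real (s^2) * (if i = j then 1 else 0)"
    using assms by (simp add: ZZ sum_distrib_left[symmetric] delta_mult mult_delta sum.delta sum.delta')
  also have "\<dots> = (if i = j then 1 else 0)"
  proof -
    have "of_real c * of_real c + of_real (s^2) = (1::complex)"
      using arg_cong[OF cs, of complex_of_real] by (simp add: power2_eq_square)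
    then show ?thesis by (simp add: algebra_simps)
  qed
  finally show ?thesis .
qed

lemma Uf_unit2: assumes "i < N" "j < N"
  shows "(\<Sum>k<N. cnj (Uf k i) * Uf k j) = (if i = j then 1 else 0)"
proof -
  have "(\<Sum>k<N. cnj (Uf k i) * Uf k j) =
     (\<Sum>k<N. (of_real c * (if k = i then 1 else 0) - Z i k) * (of_real c * (if k = j then 1 else 0) + Z k j))"
    by (intro sum.cong refl) (simp add: Uf_def Z_adj)
  also have "\<dots> = (\<Sum>k<N. of_real c * of_real c * ((if k = i then 1 else 0) * (if k = j then 1 else 0)))
      + (\<Sum>k<N. of_real c * ((if k = i then 1 else 0) * Z k j)) - (\<Sum>k<N. of_real c * (Z i k * (if k = j then 1 else 0)))
      - (\<Sum>k<N. Z i k * Z k j)"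
    by (simp add: algebra_simps sum.distrib sum_subtractf)
  also have "\<dots> = of_real c * of_real c * (if i = j then 1 else 0) + of_real c * Z i j - of_real c * Z i j
      + of_real (s^2) * (if i = j then 1 else 0)"
    using assms by (simp add: ZZ sum_distrib_left[symmetric] delta_mult mult_delta sum.delta sum.delta')
  also have "\<dots> = (if i = j then 1 else 0)"
  proof -
    have "of_real c * of_real c + of_real (s^2) = (1::complex)"
      using arg_cong[OF cs, of complex_of_real] by (simp add: power2_eq_square)
    then show ?thesis by (simp add: algebra_simps)
  qed
  finally show ?thesis .
qed

lemma Um_unitary: "unitary_mat N Um"
  unfolding unitary_mat_def
proof (intro conjI)
  show "Um \<in> carrier_mat N N" by (rule Um_car)
  show "Um * mat_adjoint Um = 1\<^sub>m N"
  proof (rule eq_matI)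
    fix i j assume "i < dim_row (1\<^sub>m N)" "j < dim_col (1\<^sub>m N)"
    then have ij: "i < N" "j < N" by auto
    have "(Um * mat_adjoint Um) $$ (i,j) = (\<Sum>k<N. Uf i k * cnj (Uf j k))"
      using ij by (auto simp: Um_def scalar_prod_def atLeast0LessThan intro!: sum.cong)
    then show "(Um * mat_adjoint Um) $$ (i,j) = 1\<^sub>m N $$ (i,j)" using Uf_unit1[OF ij] ij by simp
  qed (auto simp: Um_def)
  show "mat_adjoint Um * Um = 1\<^sub>m N"
  proof (rule eq_matI)
    fix i j assume "i < dim_row (1\<^sub>m N)" "j < dim_col (1\<^sub>m N)"
    then have ij: "i < N" "j < N" by auto
    have "(mat_adjoint Um * Um) $$ (i,j) = (\<Sum>k<N. cnj (Uf k i) * Uf k j)"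
      using ij by (auto simp: Um_def scalar_prod_def atLeast0LessThan intro!: sum.cong)
    then show "(mat_adjoint Um * Um) $$ (i,j) = 1\<^sub>m N $$ (i,j)" using Uf_unit2[OF ij] ij by simp
  qed (auto simp: Um_def)
qed

lemma Uf_col: assumes "i < N" "p < n"
  shows "Uf i p = of_real c * E i p + T i p"
proof -
  have Wp: "W p a = E p a" for a using assms(2) by (simp add: W_def V_low)
  have "P i p = (\<Sum>a<n. W i a * cnj (E p a))" by (simp add: P_def Wp)
  also have "\<dots> = (\<Sum>a<n. if a = p then W i a else 0)" by (intro sum.cong) (auto simp: E_def)
  also have "\<dots> = W i p" using assms(2) by simp
  finally have Pp: "P i p = E i p - V i p" by (simp add: W_def)
  have "Uf i p = of_real c * E i p + \<i> * of_real s * V i p"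
    by (simp add: Uf_def Z_def Pp E_def algebra_simps)
  also have "\<i> * of_real s * V i p = T i p"
  proof (cases "s = 0")
    case True then show ?thesis using T_s0[OF True assms] by (simp add: V_def)
  next
    case False then show ?thesis by (simp add: V_def)
  qed
  finally show ?thesis .
qed

lemma Uf_block: assumes "b < d" "a < n" "p < n"
  shows "Uf (b*n+a) p = \<omega> * K b $$ (a,p)"
proof -
  have bi: "b*n + a < N"
  proof -
    have "b*n + a < b*n + n" using assms by simp
    also have "\<dots> = Suc b * n" by simp
    also have "\<dots> \<le> d*n" using assms by (intro mult_le_mono1) simp
    finally show ?thesis by (simp add: N_def)
  qed
  show ?thesis
  proof (cases "b = 0")
    case True
    have "Uf (b*n+a) p = of_real c * E a p" using Uf_col[OF bi assms(3)] True assms by (simp add: T_low)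
    also have "\<dots> = \<omega> * K b $$ (a,p)"
      using True assms by (simp add: K0 E_def omega_alpha[symmetric])
    finally show ?thesis .
  next
    case False
    then have ge: "n \<le> b*n + a" by (simp add: trans_le_add1)
    then have "E (b*n+a) p = 0" using assms by (simp add: E_def)
    moreover have "(b*n+a) div n = b" "(b*n+a) mod n = a" using assms by auto
    ultimately show ?thesis using Uf_col[OF bi assms(3)] ge by (simp add: T_def)
  qed
qed

lemma Um_dilation: assumes "\<rho> \<in> carrier_mat n n"
  shows "kraus_channel n d K \<rho> = ptrace_B d n (Um * anc_state d n \<rho> * mat_adjoint Um)"
proof (rule eq_matI)
  fix a a' assume "a < dim_row (ptrace_B d n (Um * anc_state d n \<rho> * mat_adjoint Um))"
     "a' < dim_col (ptrace_B d n (Um * anc_state d n \<rho> * mat_adjoint Um))"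
  then have aa: "a < n" "a' < n" by (auto simp: ptrace_B_def)
  have U: "Um \<in> carrier_mat (d*n) (d*n)" using Um_car by (simp add: N_def)
  have bi: "b*n + x < N" if "b < d" "x < n" for b x
  proof -
    have "b*n + x < b*n + n" using that by simp
    also have "\<dots> = Suc b * n" by simp
    also have "\<dots> \<le> d*n" using that by (intro mult_le_mono1) simp
    finally show ?thesis by (simp add: N_def)
  qed
  have "ptrace_B d n (Um * anc_state d n \<rho> * mat_adjoint Um) $$ (a,a') =
     (\<Sum>b<d. \<Sum>p<n. \<Sum>q<n. Um $$ (b*n+a,p) * \<rho> $$ (p,q) * cnj (Um $$ (b*n+a',q)))"
    by (rule ptrace_entry[OF U d aa])
  also have "\<dots> = (\<Sum>b<d. \<Sum>p<n. \<Sum>q<n. (cnj \<omega> * \<omega>) * (K b $$ (a,p) * \<rho> $$ (p,q) * cnj (K b $$ (a',q))))"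
  proof (intro sum.cong refl)
    fix b p q assume "b \<in> {..<d}" "p \<in> {..<n}" "q \<in> {..<n}"
    then have bpq: "b < d" "p < n" "q < n" by auto
    have "Um $$ (b*n+a,p) = Uf (b*n+a) p" using bi[OF bpq(1) aa(1)] bpq nN by (simp add: Um_def)
    moreover have "Um $$ (b*n+a',q) = Uf (b*n+a') q" using bi[OF bpq(1) aa(2)] bpq nN by (simp add: Um_def)
    ultimately show "Um $$ (b*n+a,p) * \<rho> $$ (p,q) * cnj (Um $$ (b*n+a',q)) =
       (cnj \<omega> * \<omega>) * (K b $$ (a,p) * \<rho> $$ (p,q) * cnj (K b $$ (a',q)))"
      using Uf_block[OF bpq(1) aa(1) bpq(2)] Uf_block[OF bpq(1) aa(2) bpq(3)] by (simp add: algebra_simps)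
  qed
  also have "\<dots> = kraus_channel n d K \<rho> $$ (a,a')"
    by (simp add: kraus_entry[OF K assms aa] omega_norm)
  finally show "kraus_channel n d K \<rho> $$ (a,a') = ptrace_B d n (Um * anc_state d n \<rho> * mat_adjoint Um) $$ (a,a')" ..
qed (simp_all add: kraus_channel_def ptrace_B_def)

end




lemma lin1: "(x::complex) - a - b = 0 \<Longrightarrow> x = a + b"
proof -
  assume h: "x - a - b = 0"
  have "x = (x - a - b) + (a + b)" by (simp add: algebra_simps)
  then show ?thesis using h by simp
qed
lemma lin2: "(x::complex) - a + b = 0 \<Longrightarrow> x = a - b"
proof -
  assume h: "x - a + b = 0"
  have "x = (x - a + b) + (a - b)" by (simp add: algebra_simps)
  then show ?thesis using h by simp
qed

lemma eig_cong: "(\<And>i j. i < N \<Longrightarrow> j < N \<Longrightarrow> A i j = B i j) \<Longrightarrow> eig N A l = eig N B l"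
proof -
  assume h: "\<And>i j. i < N \<Longrightarrow> j < N \<Longrightarrow> A i j = B i j"
  have "mvec N A v i = mvec N B v i" if "i < N" for v i
    unfolding mvec_def using h that by (intro sum.cong) auto
  then show ?thesis unfolding eig_def by auto
qed

context constr begin

lemma Uf_eig: assumes "eig N Uf l"
  shows "l = of_real c + \<i> * of_real s \<or> l = of_real c - \<i> * of_real s"
proof -
  obtain v where v: "\<exists>i<N. v i \<noteq> 0" "\<forall>i<N. mvec N Uf v i = l * v i" using assms unfolding eig_def by blast
  have Zv: "mvec N Z v i = (l - of_real c) * v i" if "i < N" for i
  proof -
    have "mvec N Uf v i = of_real c * v i + mvec N Z v i"
      using that by (simp add: mvec_def Uf_def distrib_right sum.distrib mult.assoc delta_mult sum.delta sum_distrib_left[symmetric])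
    then show ?thesis using v(2) that by (simp add: algebra_simps)
  qed
  obtain i where i: "i < N" "v i \<noteq> 0" using v(1) by blast
  have "mvec N Z (mvec N Z v) i = mvec N (mmul N Z Z) v i" by (simp add: mvec_mmul)
  also have "\<dots> = (\<Sum>j<N. (- of_real (s^2) * (if i = j then 1 else 0)) * v j)"
    unfolding mvec_def mmul_def using i by (intro sum.cong refl) (simp add: ZZ)
  also have "\<dots> = (\<Sum>j<N. if i = j then - of_real (s^2) * v i else 0)" by (intro sum.cong) auto
  also have "\<dots> = - of_real (s^2) * v i" using i by simp
  finally have 1: "mvec N Z (mvec N Z v) i = - of_real (s^2) * v i" .
  have "mvec N Z (mvec N Z v) i = mvec N Z (\<lambda>j. (l - of_real c) * v j) i"
    by (rule arg_cong[where f="\<lambda>f. f i"], rule mvec_cong) (simp add: Zv)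
  also have "\<dots> = (l - of_real c) * ((l - of_real c) * v i)" using Zv[OF i(1)] by (simp add: mvec_scal)
  finally have "(l - of_real c) * ((l - of_real c) * v i) = - of_real (s^2) * v i" using 1 by simp
  then have "((l - of_real c)^2 + of_real (s^2)) * v i = 0" by (simp add: algebra_simps power2_eq_square)
  then have "(l - of_real c)^2 + of_real (s^2) = 0" using i by simp
  then have "(l - of_real c - \<i> * of_real s) * (l - of_real c + \<i> * of_real s) = 0"
    by (simp add: algebra_simps power2_eq_square)
  then have "l - of_real c - \<i> * of_real s = 0 \<or> l - of_real c + \<i> * of_real s = 0" by simp
  then show ?thesis
  proof
    assume "l - of_real c - \<i> * of_real s = 0"
    then have "l = of_real c + \<i> * of_real s" by (rule lin1)
    then show ?thesis ..
  next
    assume "l - of_real c + \<i> * of_real s = 0"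
    then have "l = of_real c - \<i> * of_real s" by (rule lin2)
    then show ?thesis ..
  qed
qed

lemma theta: "cos (arccos c) = c" "sin (arccos c) = s" "0 \<le> arccos c" "arccos c < pi"
proof -
  show "cos (arccos c) = c" using c_ge0 c_le1 by simp
  show "sin (arccos c) = s" using c_ge0 c_le1 by (simp add: sin_arccos s_def)
  show "0 \<le> arccos c" using c_ge0 c_le1 by (simp add: arccos_lbound)
  have "arccos c \<le> pi/2" using c_ge0 c_le1 by (rule arccos_le_pi2)
  then show "arccos c < pi" using pi_gt_zero by linarith
qed

lemma Arg_eigs: assumes "eig N Uf l" shows "\<bar>Arg l\<bar> = arccos c"
proof -
  let ?t = "arccos c"
  have cp: "of_real c + \<i> * of_real s = cis ?t" by (rule complex_eqI) (simp_all add: theta)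
  have cm: "of_real c - \<i> * of_real s = cis (- ?t)" by (rule complex_eqI) (simp_all add: theta)
  have "Arg (cis ?t) = ?t" using theta by (intro Arg_cis) auto
  moreover have "Arg (cis (- ?t)) = - ?t" using theta by (intro Arg_cis) auto
  ultimately show ?thesis using Uf_eig[OF assms] theta(3) cp cm by auto
qed

lemma cost_Um: "unitary_cost Um = arccos c"
proof -
  have N0: "N > 0" using n d by (simp add: N_def)
  have ev: "eigenvalue Um z \<longleftrightarrow> eig N Uf z" for z
    using eig_jnf[OF Um_car, of z] eig_cong[of N "\<lambda>i j. Um $$ (i,j)" Uf z] by (simp add: Um_def)
  obtain z0 where "eigenvalue Um z0" using spectrum_non_empty[OF Um_car N0] by (auto simp: spectrum_def)
  have S: "{\<bar>Arg z\<bar> | z. eigenvalue Um z} = {arccos c}"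
  proof
    show "{\<bar>Arg z\<bar> | z. eigenvalue Um z} \<subseteq> {arccos c}" using Arg_eigs ev by blast
    show "{arccos c} \<subseteq> {\<bar>Arg z\<bar> | z. eigenvalue Um z}"
      using Arg_eigs ev \<open>eigenvalue Um z0\<close> by force
  qed
  show ?thesis unfolding unitary_cost_def S by simp
qed

end




theorem theorem3:
  fixes n d :: nat and K :: "nat \<Rightarrow> complex mat" and \<alpha> :: complex
  assumes "n \<ge> 1" and "d \<ge> 1"
    and "\<forall>j<d. K j \<in> carrier_mat n n"
    and "mat n n (\<lambda>(i, k). \<Sum>j<d. (mat_adjoint (K j) * K j) $$ (i, k)) = 1\<^sub>m n"
    and "K 0 = \<alpha> \<cdot>\<^sub>m 1\<^sub>m n"
    and "\<forall>j. 1 \<le> j \<and> j < d \<longrightarrow> mat_trace (K j) = 0"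
  shows "channel_cost n (kraus_channel n d K) = arccos (cmod \<alpha>)"
proof -
  interpret constr n d K \<alpha> using assms by unfold_locales auto
  define X where "X = {unitary_cost U | U m. m \<ge> 1 \<and> unitary_mat (m * n) U \<and>
     (\<forall>\<rho>. density_mat n \<rho> \<longrightarrow> kraus_channel n d K \<rho> = ptrace_B m n (U * anc_state m n \<rho> * mat_adjoint U))}"
  have mem: "arccos (cmod \<alpha>) \<in> X"
  proof -
    have "unitary_mat (d * n) Um" using Um_unitary by (simp add: N_def)
    moreover have "\<forall>\<rho>. density_mat n \<rho> \<longrightarrow> kraus_channel n d K \<rho> = ptrace_B d n (Um * anc_state d n \<rho> * mat_adjoint Um)"
      using Um_dilation by (auto simp: density_mat_def)
    moreover have "unitary_cost Um = arccos (cmod \<alpha>)" using cost_Um by (simp add: c_def)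
    ultimately show ?thesis unfolding X_def mem_Collect_eq using assms(2)
      by (intro exI[of _ Um] exI[of _ d]) simp
  qed
  have low: "arccos (cmod \<alpha>) \<le> x" if "x \<in> X" for x
    using that unfolding X_def using cost_lower[OF assms(1,2,3,4,5,6)] by blast
  have "Inf X = arccos (cmod \<alpha>)" by (rule cInf_eq_minimum[OF mem low])
  then show ?thesis by (simp add: channel_cost_def X_def)
qed



end
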